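(* Let $H=\sum_{a=1}^m\lambda_aE_a$ be a $k$-local Hamiltonian and $G=\sum_{b=1}^{m'}\kappa_bF_b$ a $k'$-local Hamiltonian. Then, for a universal implied constant, $$\|[H,G]\|_F\lesssim(4(k'+k))^{3k}\|H\|_{2,\mathrm{loc}}\|G\|_F,\qquad \|[H,G]\|_{2,\mathrm{loc}}\lesssim(4(k'+k))^{3k}\|H\|_{2,\mathrm{loc}}\|G\|_{2,\mathrm{loc}}.$$
   Context: $\mathcal{P}$ denotes the set of $n$-qubit tensor products of Pauli matrices; $\mathrm{supp}(P)$ is the set of qubits on which $P$ acts non-trivially. A $k$-local Hamiltonian is $H=\sum_a\lambda_aE_a$ with real $\lambda_a$ and distinct non-identity Paulis $E_a$ with $|\mathrm{supp}(E_a)|\le k$. For any operator $A=\sum_{X\in\mathcal{P}}\xi_XX$ (Pauli expansion, possibly complex coefficients), $\|A\|_{1,\mathrm{loc}}=\max_{i\in[n]}\sum_{X:\,i\in\mathrm{supp}(X)}|\xi_X|$ and $\|A\|_{2,\mathrm{loc}}=\max_{i\in[n]}\big(\sum_{X:\,i\in\mathrm{supp}(X)}|\xi_X|^2\big)^{1/2}$. $\|\cdot\|_F$ is the Frobenius norm and $f\lesssim g$ means $f\le c\,g$ for a universal constant $c$. *)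

theory Defs
  imports Complex_Main "Jordan_Normal_Form.Matrix"
begin

(* Single-qubit Pauli matrices: 0 = I, 1 = X, 2 = Y, 3 = Z *)
definition pauli1 :: "nat \<Rightarrow> complex mat" where
  "pauli1 a = mat 2 2 (\<lambda>(r, c).
     if a = 1 then (if r \<noteq> c then 1 else 0)
     else if a = 2 then (if r = 0 \<and> c = 1 then - \<i> else if r = 1 \<and> c = 0 then \<i> else 0)
     else if a = 3 then (if r = c then (if r = 0 then 1 else -1) else 0)
     else (if r = c then 1 else 0))"

definition paulis :: "nat \<Rightarrow> (nat \<Rightarrow> nat) set" where
  "paulis n = {p. (\<forall>i<n. p i < 4) \<and> (\<forall>i\<ge>n. p i = 0)}"

definition supp :: "(nat \<Rightarrow> nat) \<Rightarrow> nat set" where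
  "supp p = {i. p i \<noteq> 0}"

(* tensor product  pauli1 (p 0) \<otimes> ... \<otimes> pauli1 (p (n-1)),  qubit i = bit i of the index *)
definition pauli_mat :: "nat \<Rightarrow> (nat \<Rightarrow> nat) \<Rightarrow> complex mat" where
  "pauli_mat n p = mat (2^n) (2^n) (\<lambda>(r, c).
     \<Prod>i<n. pauli1 (p i) $$ (r div 2^i mod 2, c div 2^i mod 2))"

definition op_of :: "nat \<Rightarrow> ((nat \<Rightarrow> nat) \<Rightarrow> complex) \<Rightarrow> complex mat" where
  "op_of n \<xi> = mat (2^n) (2^n) (\<lambda>(r, c). \<Sum>X\<in>paulis n. \<xi> X * pauli_mat n X $$ (r, c))"

definition pauli_coeff :: "nat \<Rightarrow> complex mat \<Rightarrow> (nat \<Rightarrow> nat) \<Rightarrow> complex" where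
  "pauli_coeff n A = (THE \<xi>. (\<forall>X. X \<notin> paulis n \<longrightarrow> \<xi> X = 0) \<and> A = op_of n \<xi>)"

(* max over i \<in> [n]; the inserted 0 only matters for n = 0 since all terms are \<ge> 0 *)
definition loc1_norm :: "nat \<Rightarrow> complex mat \<Rightarrow> real" where
  "loc1_norm n A = Max (insert 0 ((\<lambda>i. \<Sum>X\<in>{X\<in>paulis n. i \<in> supp X}. cmod (pauli_coeff n A X)) ` {..<n}))"

definition loc2_norm :: "nat \<Rightarrow> complex mat \<Rightarrow> real" where
  "loc2_norm n A = Max (insert 0 ((\<lambda>i. sqrt (\<Sum>X\<in>{X\<in>paulis n. i \<in> supp X}. (cmod (pauli_coeff n A X))\<^sup>2)) ` {..<n}))"

definition frob_norm :: "complex mat \<Rightarrow> real" where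
  "frob_norm A = sqrt (\<Sum>r<dim_row A. \<Sum>c<dim_col A. (cmod (A $$ (r, c)))\<^sup>2)"

definition commutator :: "complex mat \<Rightarrow> complex mat \<Rightarrow> complex mat" where
  "commutator A B = A * B - B * A"

definition is_klocal_ham :: "nat \<Rightarrow> nat \<Rightarrow> complex mat \<Rightarrow> bool" where
  "is_klocal_ham n k H \<longleftrightarrow> (\<exists>lam :: (nat \<Rightarrow> nat) \<Rightarrow> real.
     (\<forall>X. lam X \<noteq> 0 \<longrightarrow> X \<in> paulis n \<and> X \<noteq> (\<lambda>_. 0) \<and> card (supp X) \<le> k) \<and>
     H = op_of n (\<lambda>X. complex_of_real (lam X)))"

end

theory Submission
  imports Defs
begin

lemma CS_sum:
  fixes a b :: "'a \<Rightarrow> real"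
  shows "(\<Sum>i\<in>I. a i * b i)\<^sup>2 \<le> (\<Sum>i\<in>I. (a i)\<^sup>2) * (\<Sum>i\<in>I. (b i)\<^sup>2)"
proof -
  have "0 \<le> (\<Sum>i\<in>I. \<Sum>j\<in>I. (a i * b j - a j * b i)\<^sup>2)"
    by (intro sum_nonneg) auto
  also have "\<dots> = (\<Sum>i\<in>I. \<Sum>j\<in>I. (a i)\<^sup>2 * (b j)\<^sup>2 + (a j)\<^sup>2 * (b i)\<^sup>2 - 2 * ((a i * b i) * (a j * b j)))"
    by (intro sum.cong refl) (simp add: power2_eq_square algebra_simps)
  also have "\<dots> = 2 * ((\<Sum>i\<in>I. (a i)\<^sup>2) * (\<Sum>i\<in>I. (b i)\<^sup>2) - (\<Sum>i\<in>I. a i * b i)\<^sup>2)"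
  proof -
    have e1: "(\<Sum>i\<in>I. \<Sum>j\<in>I. (a i)\<^sup>2 * (b j)\<^sup>2) = (\<Sum>i\<in>I. (a i)\<^sup>2) * (\<Sum>i\<in>I. (b i)\<^sup>2)"
      by (simp add: sum_product)
    have e2: "(\<Sum>i\<in>I. \<Sum>j\<in>I. (a j)\<^sup>2 * (b i)\<^sup>2) = (\<Sum>i\<in>I. (a i)\<^sup>2) * (\<Sum>i\<in>I. (b i)\<^sup>2)"
      by (subst sum.swap) (simp add: sum_product)
    have e3: "(\<Sum>i\<in>I. \<Sum>j\<in>I. (a i * b i) * (a j * b j)) = (\<Sum>i\<in>I. a i * b i)\<^sup>2"
      by (simp add: sum_product power2_eq_square)
    have "(\<Sum>i\<in>I. \<Sum>j\<in>I. (a i)\<^sup>2 * (b j)\<^sup>2 + (a j)\<^sup>2 * (b i)\<^sup>2 - 2 * ((a i * b i) * (a j * b j)))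
      = (\<Sum>i\<in>I. \<Sum>j\<in>I. (a i)\<^sup>2 * (b j)\<^sup>2) + (\<Sum>i\<in>I. \<Sum>j\<in>I. (a j)\<^sup>2 * (b i)\<^sup>2)
        - 2 * (\<Sum>i\<in>I. \<Sum>j\<in>I. (a i * b i) * (a j * b j))"
      by (simp only: sum_subtractf sum.distrib sum_distrib_left)
    then show ?thesis unfolding e1 e2 e3 by (simp add: right_diff_distrib)
  qed
  finally show ?thesis by simp
qed

lemma CS_card:
  fixes a :: "'a \<Rightarrow> real"
  shows "(\<Sum>i\<in>I. a i)\<^sup>2 \<le> real (card I) * (\<Sum>i\<in>I. (a i)\<^sup>2)"
  using CS_sum[of "\<lambda>_. 1" a I] by simp

lemma bit_shift:
  fixes m n i :: nat
  assumes "m < 2^n" "i < n"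
  shows "(m + 2^n) div 2^i mod 2 = m div 2^i mod 2"
proof -
  obtain d where d: "n - i = Suc d" using assms by (metis Suc_diff_Suc)
  have "(2::nat)^n = 2^i * 2^(n-i)" using assms by (simp add: power_add[symmetric])
  hence "(m + 2^n) div 2^i = m div 2^i + 2 * 2^d" using d by simp
  then show ?thesis by simp
qed

lemma bit_top0: "(m::nat) < 2^n \<Longrightarrow> m div 2^n mod 2 = 0" by simp
lemma bit_top1: "(m::nat) < 2^n \<Longrightarrow> (m + 2^n) div 2^n mod 2 = 1" by simp

lemma sum_bits_prod:
  fixes f :: "nat \<Rightarrow> nat \<Rightarrow> 'a::comm_semiring_1"
  shows "(\<Sum>m<2^n. \<Prod>i<n. f i (m div 2^i mod 2)) = (\<Prod>i<n. f i 0 + f i 1)"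
proof (induction n)
  case 0
  then show ?case by simp
next
  case (Suc n)
  define g where "g = (\<lambda>m. \<Prod>i<Suc n. f i (m div 2^i mod 2))"
  let ?g = g
  have split: "(\<Sum>m<2^Suc n. ?g m) = (\<Sum>m<2^n. ?g m) + (\<Sum>m<2^n. ?g (m + 2^n))"
  proof -
    have e: "(2::nat)^Suc n = 2^n + 2^n" by simp
    have "(\<Sum>m<2^Suc n. ?g m) = (\<Sum>m\<in>{0..<2^n}. ?g m) + (\<Sum>m\<in>{2^n..<2^n+2^n}. ?g m)"
      unfolding e lessThan_atLeast0 by (rule sum.atLeastLessThan_concat[symmetric]) auto
    also have "(\<Sum>m\<in>{2^n..<2^n+2^n}. ?g m) = (\<Sum>m\<in>{0..<2^n}. ?g (m + 2^n))"
      using sum.shift_bounds_nat_ivl[of ?g 0 "2^n" "2^n"] by simp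
    finally show ?thesis by (simp add: lessThan_atLeast0)
  qed
  have a: "?g m = (\<Prod>i<n. f i (m div 2^i mod 2)) * f n 0" if "m < 2^n" for m
    using that by (simp add: g_def prod.lessThan_Suc)
  have b: "?g (m + 2^n) = (\<Prod>i<n. f i (m div 2^i mod 2)) * f n 1" if "m < 2^n" for m
  proof -
    have "(\<Prod>i<n. f i ((m + 2^n) div 2^i mod 2)) = (\<Prod>i<n. f i (m div 2^i mod 2))"
      by (intro prod.cong refl) (simp add: bit_shift that)
    then show ?thesis using that by (simp add: g_def prod.lessThan_Suc)
  qed
  have "(\<Sum>m<2^Suc n. \<Prod>i<Suc n. f i (m div 2^i mod 2)) = (\<Sum>m<2^n. (\<Prod>i<n. f i (m div 2^i mod 2))) * f n 0
        + (\<Sum>m<2^n. (\<Prod>i<n. f i (m div 2^i mod 2))) * f n 1"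
    using split unfolding g_def[symmetric] by (simp add: a b sum_distrib_right)
  also have "\<dots> = (\<Prod>i<Suc n. f i 0 + f i 1)"
    using Suc.IH by (simp add: prod.lessThan_Suc distrib_left)
  finally show ?case .
qed

definition lmul :: "nat \<Rightarrow> nat \<Rightarrow> nat" where
  "lmul a b = (if a = 0 then b else if b = 0 then a else if a = b then 0 else 6 - a - b)"

definition om1 :: "nat \<Rightarrow> nat \<Rightarrow> complex" where
  "om1 a b = (if a = 0 \<or> b = 0 \<or> a = b then 1
     else if (a = 1 \<and> b = 2) \<or> (a = 2 \<and> b = 3) \<or> (a = 3 \<and> b = 1) then \<i> else - \<i>)"

definition p1 :: "nat \<Rightarrow> nat \<Rightarrow> nat \<Rightarrow> complex" where
  "p1 a x y = pauli1 a $$ (x, y)"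

lemma lt4_cases: "(a::nat) < 4 \<Longrightarrow> a = 0 \<or> a = 1 \<or> a = 2 \<or> a = 3" by auto
lemma lt2_cases: "(a::nat) < 2 \<Longrightarrow> a = 0 \<or> a = 1" by auto

lemma p1_mult:
  assumes "a < 4" "b < 4" "x < 2" "y < 2"
  shows "p1 a x 0 * p1 b 0 y + p1 a x 1 * p1 b 1 y = om1 a b * p1 (lmul a b) x y"
  using lt4_cases[OF assms(1)] lt4_cases[OF assms(2)] lt2_cases[OF assms(3)] lt2_cases[OF assms(4)]
  by (auto simp: p1_def pauli1_def om1_def lmul_def)

lemma p1_orth:
  assumes "a < 4" "b < 4"
  shows "(cnj (p1 a 0 0) * p1 b 0 0 + cnj (p1 a 0 1) * p1 b 0 1)
       + (cnj (p1 a 1 0) * p1 b 1 0 + cnj (p1 a 1 1) * p1 b 1 1) = (if a = b then 2 else 0)"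
  using lt4_cases[OF assms(1)] lt4_cases[OF assms(2)]
  by (auto simp: p1_def pauli1_def)

lemma lmul_lt4: "a < 4 \<Longrightarrow> b < 4 \<Longrightarrow> lmul a b < 4"
  by (auto simp: lmul_def)
lemma lmul_comm: "lmul a b = lmul b a" by (auto simp: lmul_def)
lemma lmul_cancel: "a < 4 \<Longrightarrow> b < 4 \<Longrightarrow> lmul a (lmul a b) = b"
  using lt4_cases[of a] lt4_cases[of b] by (auto simp: lmul_def)
lemma lmul_0: "lmul a 0 = a" "lmul 0 a = a" by (auto simp: lmul_def)
lemma lmul_eq0: "a < 4 \<Longrightarrow> b < 4 \<Longrightarrow> lmul a b = 0 \<longleftrightarrow> a = b"
  by (auto simp: lmul_def)
lemma om1_comm: "\<not> (a \<noteq> 0 \<and> b \<noteq> 0 \<and> a \<noteq> b) \<Longrightarrow> om1 a b = om1 b a"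
  by (auto simp: om1_def)
lemma om1_norm: "cmod (om1 a b) = 1" by (auto simp: om1_def)

definition pm :: "nat \<Rightarrow> (nat \<Rightarrow> nat) \<Rightarrow> nat \<Rightarrow> nat \<Rightarrow> complex" where
  "pm n X r c = (\<Prod>i<n. p1 (X i) (r div 2^i mod 2) (c div 2^i mod 2))"

lemma pauli_mat_pm: "r < 2^n \<Longrightarrow> c < 2^n \<Longrightarrow> pauli_mat n X $$ (r, c) = pm n X r c"
  by (simp add: pauli_mat_def pm_def p1_def)

definition pmul :: "(nat \<Rightarrow> nat) \<Rightarrow> (nat \<Rightarrow> nat) \<Rightarrow> nat \<Rightarrow> nat" where
  "pmul X Y = (\<lambda>i. lmul (X i) (Y i))"

definition omega :: "nat \<Rightarrow> (nat \<Rightarrow> nat) \<Rightarrow> (nat \<Rightarrow> nat) \<Rightarrow> complex" where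
  "omega n X Y = (\<Prod>i<n. om1 (X i) (Y i))"

lemma paulis_lt4: "X \<in> paulis n \<Longrightarrow> X i < 4"
  by (cases "i < n") (auto simp: paulis_def)

lemma pmul_paulis: "X \<in> paulis n \<Longrightarrow> Y \<in> paulis n \<Longrightarrow> pmul X Y \<in> paulis n"
  by (auto simp: paulis_def pmul_def lmul_lt4 lmul_def)

lemma finite_paulis: "finite (paulis n)"
proof -
  have "paulis n = {f. \<forall>x. (x \<in> {..<n} \<longrightarrow> f x \<in> {..<4}) \<and> (x \<notin> {..<n} \<longrightarrow> f x = 0)}"
    by (auto simp: paulis_def)
  then show ?thesis using finite_set_of_finite_funs[of "{..<n}" "{..<4::nat}" 0] by simp
qed

lemma bit_lt2: "(m::nat) div 2^i mod 2 < 2" by simp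

lemma pm_mult:
  assumes "X \<in> paulis n" "Y \<in> paulis n"
  shows "(\<Sum>m<2^n. pm n X r m * pm n Y m c) = omega n X Y * pm n (pmul X Y) r c"
proof -
  have "(\<Sum>m<2^n. pm n X r m * pm n Y m c) =
    (\<Sum>m<2^n. \<Prod>i<n. (\<lambda>i b. p1 (X i) (r div 2^i mod 2) b * p1 (Y i) b (c div 2^i mod 2)) i (m div 2^i mod 2))"
    by (simp add: pm_def prod.distrib)
  also have "\<dots> = (\<Prod>i<n. p1 (X i) (r div 2^i mod 2) 0 * p1 (Y i) 0 (c div 2^i mod 2)
                  + p1 (X i) (r div 2^i mod 2) 1 * p1 (Y i) 1 (c div 2^i mod 2))"
    by (rule sum_bits_prod)
  also have "\<dots> = (\<Prod>i<n. om1 (X i) (Y i) * p1 (lmul (X i) (Y i)) (r div 2^i mod 2) (c div 2^i mod 2))"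
    by (intro prod.cong refl p1_mult paulis_lt4[OF assms(1)] paulis_lt4[OF assms(2)] bit_lt2)
  also have "\<dots> = omega n X Y * pm n (pmul X Y) r c"
    by (simp add: prod.distrib omega_def pm_def pmul_def)
  finally show ?thesis .
qed

lemma paulis_eq: "X \<in> paulis n \<Longrightarrow> Y \<in> paulis n \<Longrightarrow> (X = Y) = (\<forall>i<n. X i = Y i)"
  by (auto simp: paulis_def fun_eq_iff) (metis not_le)

lemma pm_orth:
  assumes "X \<in> paulis n" "Y \<in> paulis n"
  shows "(\<Sum>r<2^n. \<Sum>c<2^n. cnj (pm n X r c) * pm n Y r c) = (if X = Y then 2^n else 0)"
proof -
  define g where "g = (\<lambda>i a b. cnj (p1 (X i) a b) * p1 (Y i) a b)"
  have "(\<Sum>r<2^n. \<Sum>c<2^n. cnj (pm n X r c) * pm n Y r c) =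
     (\<Sum>r<2^n. \<Sum>c<2^n. \<Prod>i<n. (\<lambda>i b. g i (r div 2^i mod 2) b) i (c div 2^i mod 2))"
    by (simp add: pm_def g_def prod.distrib)
  also have "\<dots> = (\<Sum>r<2^n. \<Prod>i<n. (\<lambda>i a. g i a 0 + g i a 1) i (r div 2^i mod 2))"
    by (intro sum.cong refl sum_bits_prod)
  also have "\<dots> = (\<Prod>i<n. (g i 0 0 + g i 0 1) + (g i 1 0 + g i 1 1))"
    by (rule sum_bits_prod)
  also have "\<dots> = (\<Prod>i<n. if X i = Y i then 2 else 0)"
    unfolding g_def by (intro prod.cong refl p1_orth paulis_lt4[OF assms(1)] paulis_lt4[OF assms(2)])
  also have "\<dots> = (if X = Y then 2^n else 0)"
  proof (cases "X = Y")
    case True then show ?thesis by simp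
  next
    case False
    then obtain i where "i < n" "X i \<noteq> Y i" using paulis_eq[OF assms] by auto
    then show ?thesis using False by (auto intro: prod_zero)
  qed
  finally show ?thesis .
qed

lemma op_entry: "r < 2^n \<Longrightarrow> c < 2^n \<Longrightarrow> op_of n \<xi> $$ (r, c) = (\<Sum>X\<in>paulis n. \<xi> X * pm n X r c)"
  by (simp add: op_of_def pauli_mat_pm)

lemma dim_op [simp]: "dim_row (op_of n \<xi>) = 2^n" "dim_col (op_of n \<xi>) = 2^n"
  by (simp_all add: op_of_def)

lemma extr_coeff:
  assumes Z: "Z \<in> paulis n"
  shows "(\<Sum>r<2^n. \<Sum>c<2^n. cnj (pm n Z r c) * op_of n \<xi> $$ (r, c)) = 2^n * \<xi> Z"
proof -
  have "(\<Sum>r<2^n. \<Sum>c<2^n. cnj (pm n Z r c) * op_of n \<xi> $$ (r, c))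
      = (\<Sum>r<2^n. \<Sum>c<2^n. \<Sum>X\<in>paulis n. \<xi> X * (cnj (pm n Z r c) * pm n X r c))"
    by (intro sum.cong refl) (simp add: op_entry sum_distrib_left algebra_simps)
  also have "\<dots> = (\<Sum>X\<in>paulis n. \<xi> X * (\<Sum>r<2^n. \<Sum>c<2^n. cnj (pm n Z r c) * pm n X r c))"
    by (simp add: sum_distrib_left sum.swap[of _ "paulis n"])
  also have "\<dots> = (\<Sum>X\<in>paulis n. \<xi> X * (if Z = X then 2^n else 0))"
    by (intro sum.cong refl) (simp add: pm_orth Z)
  also have "\<dots> = 2^n * \<xi> Z"
    using Z finite_paulis by (simp add: if_distrib[of "\<lambda>t. _ * t"] sum.delta mult.commute cong: if_cong)
  finally show ?thesis .
qed

lemma coeff_op: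
  assumes "\<forall>X. X \<notin> paulis n \<longrightarrow> \<xi> X = 0"
  shows "pauli_coeff n (op_of n \<xi>) = \<xi>"
  unfolding pauli_coeff_def
proof (rule the_equality)
  show "(\<forall>X. X \<notin> paulis n \<longrightarrow> \<xi> X = 0) \<and> op_of n \<xi> = op_of n \<xi>" using assms by simp
next
  fix \<eta> assume h: "(\<forall>X. X \<notin> paulis n \<longrightarrow> \<eta> X = 0) \<and> op_of n \<xi> = op_of n \<eta>"
  show "\<eta> = \<xi>"
  proof
    fix X show "\<eta> X = \<xi> X"
    proof (cases "X \<in> paulis n")
      case True
      have "(2::complex)^n * \<eta> X = 2^n * \<xi> X"
        using extr_coeff[OF True, of \<eta>] extr_coeff[OF True, of \<xi>] h by simp
      then show ?thesis by simp
    next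
      case False then show ?thesis using h assms by simp
    qed
  qed
qed

lemma cmod_sq: "complex_of_real ((cmod z)\<^sup>2) = cnj z * z"
  by (metis complex_norm_square mult.commute of_real_power)

lemma frob_op: "frob_norm (op_of n \<xi>) = sqrt (2^n * (\<Sum>X\<in>paulis n. (cmod (\<xi> X))\<^sup>2))"
proof -
  have "complex_of_real (\<Sum>r<2^n. \<Sum>c<2^n. (cmod (op_of n \<xi> $$ (r, c)))\<^sup>2)
      = (\<Sum>r<2^n. \<Sum>c<2^n. cnj (op_of n \<xi> $$ (r, c)) * op_of n \<xi> $$ (r, c))"
    by (simp only: of_real_sum cmod_sq)
  also have "\<dots> = (\<Sum>r<2^n. \<Sum>c<2^n. \<Sum>X\<in>paulis n. cnj (\<xi> X) * (cnj (pm n X r c) * op_of n \<xi> $$ (r, c)))"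
    apply (intro sum.cong refl)
    apply (subst (1) op_entry, simp, simp)
    by (simp add: sum_distrib_right sum_distrib_left algebra_simps)
  also have "\<dots> = (\<Sum>X\<in>paulis n. cnj (\<xi> X) * (\<Sum>r<2^n. \<Sum>c<2^n. cnj (pm n X r c) * op_of n \<xi> $$ (r, c)))"
    by (simp add: sum_distrib_left sum.swap[of _ "paulis n"])
  also have "\<dots> = (\<Sum>X\<in>paulis n. 2^n * (cnj (\<xi> X) * \<xi> X))"
    by (intro sum.cong refl) (simp add: extr_coeff)
  also have "\<dots> = complex_of_real (2^n * (\<Sum>X\<in>paulis n. (cmod (\<xi> X))\<^sup>2))"
    using cmod_sq by (simp add: sum_distrib_left)
  finally have "(\<Sum>r<2^n. \<Sum>c<2^n. (cmod (op_of n \<xi> $$ (r, c)))\<^sup>2) = 2^n * (\<Sum>X\<in>paulis n. (cmod (\<xi> X))\<^sup>2)"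
    using of_real_eq_iff by blast
  then show ?thesis by (simp add: frob_norm_def)
qed

lemma op_minus: "op_of n \<xi> - op_of n \<eta> = op_of n (\<lambda>X. \<xi> X - \<eta> X)"
  by (rule eq_matI) (simp_all add: op_entry sum_subtractf algebra_simps)

definition conv :: "nat \<Rightarrow> ((nat \<Rightarrow> nat) \<Rightarrow> complex) \<Rightarrow> ((nat \<Rightarrow> nat) \<Rightarrow> complex) \<Rightarrow> (nat \<Rightarrow> nat) \<Rightarrow> complex" where
  "conv n \<xi> \<eta> Z = (\<Sum>X\<in>paulis n. \<Sum>Y\<in>paulis n. if pmul X Y = Z then omega n X Y * \<xi> X * \<eta> Y else 0)"

lemma op_mult: "op_of n \<xi> * op_of n \<eta> = op_of n (conv n \<xi> \<eta>)"
proof (rule eq_matI)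
  fix r c assume rc: "r < dim_row (op_of n (conv n \<xi> \<eta>))" "c < dim_col (op_of n (conv n \<xi> \<eta>))"
  then have r: "r < 2^n" and c: "c < 2^n" by auto
  have "(op_of n \<xi> * op_of n \<eta>) $$ (r, c) = (\<Sum>m<2^n. op_of n \<xi> $$ (r, m) * op_of n \<eta> $$ (m, c))"
    using r c by (simp add: scalar_prod_def lessThan_atLeast0)
  also have "\<dots> = (\<Sum>m<2^n. \<Sum>X\<in>paulis n. \<Sum>Y\<in>paulis n. \<xi> X * \<eta> Y * (pm n X r m * pm n Y m c))"
    using r c by (intro sum.cong refl) (simp add: op_entry sum_distrib_left sum_distrib_right algebra_simps)
  also have "\<dots> = (\<Sum>X\<in>paulis n. \<Sum>Y\<in>paulis n. \<xi> X * \<eta> Y * (\<Sum>m<2^n. pm n X r m * pm n Y m c))"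
    by (simp add: sum_distrib_left sum.swap[of _ "{..<2^n}"])
  also have "\<dots> = (\<Sum>X\<in>paulis n. \<Sum>Y\<in>paulis n. \<xi> X * \<eta> Y * (omega n X Y * pm n (pmul X Y) r c))"
    by (intro sum.cong refl) (simp add: pm_mult)
  also have "\<dots> = (\<Sum>X\<in>paulis n. \<Sum>Y\<in>paulis n. \<Sum>Z\<in>paulis n.
                    (if pmul X Y = Z then omega n X Y * \<xi> X * \<eta> Y else 0) * pm n Z r c)"
  proof (intro sum.cong refl)
    fix X Y assume "X \<in> paulis n" "Y \<in> paulis n"
    then have "pmul X Y \<in> paulis n" by (rule pmul_paulis)
    then show "\<xi> X * \<eta> Y * (omega n X Y * pm n (pmul X Y) r c) =
      (\<Sum>Z\<in>paulis n. (if pmul X Y = Z then omega n X Y * \<xi> X * \<eta> Y else 0) * pm n Z r c)"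
      using finite_paulis by (simp add: if_distrib[of "\<lambda>t. t * _"] sum.delta cong: if_cong)
  qed
  also have "\<dots> = (\<Sum>Z\<in>paulis n. conv n \<xi> \<eta> Z * pm n Z r c)"
    unfolding conv_def sum_distrib_right
    by (subst sum.swap, subst (2) sum.swap, rule refl)
  also have "\<dots> = op_of n (conv n \<xi> \<eta>) $$ (r, c)"
    using r c by (simp add: op_entry)
  finally show "(op_of n \<xi> * op_of n \<eta>) $$ (r, c) = op_of n (conv n \<xi> \<eta>) $$ (r, c)" .
qed simp_all

lemma card_small_subsets:
  assumes U: "finite U"
  shows "card {T. T \<subseteq> U \<and> card T \<le> k} \<le> (card U + 1)^k"
proof -
  let ?L = "{xs. set xs \<subseteq> insert None (Some ` U) \<and> length xs = k}"
  have sub: "{T. T \<subseteq> U \<and> card T \<le> k} \<subseteq> (\<lambda>xs. Some -` set xs) ` ?L"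
  proof
    fix T assume "T \<in> {T. T \<subseteq> U \<and> card T \<le> k}"
    then have TU: "T \<subseteq> U" and Tk: "card T \<le> k" by auto
    then have "finite T" using U finite_subset by blast
    then obtain ys where ys: "set ys = T" "distinct ys" using finite_distinct_list by blast
    then have len: "length ys = card T" using distinct_card by fastforce
    define xs where "xs = map Some ys @ replicate (k - card T) None"
    have "xs \<in> ?L" using TU Tk len ys by (auto simp: xs_def)
    moreover have "Some -` set xs = T" using ys by (auto simp: xs_def)
    ultimately show "T \<in> (\<lambda>xs. Some -` set xs) ` ?L" by blast
  qed
  have finL: "finite ?L" using U by (intro finite_lists_length_eq) auto
  have "card {T. T \<subseteq> U \<and> card T \<le> k} \<le> card ((\<lambda>xs. Some -` set xs) ` ?L)"
    using sub finL by (intro card_mono) auto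
  also have "\<dots> \<le> card ?L" using finL by (rule card_image_le)
  also have "\<dots> = (card (insert None (Some ` U)))^k" by (rule card_lists_length_eq) (use U in auto)
  also have "card (insert None (Some ` U)) = card U + 1"
    using U by (simp add: card_image)
  finally show ?thesis .
qed

definition rst :: "(nat \<Rightarrow> nat) \<Rightarrow> nat set \<Rightarrow> nat \<Rightarrow> nat" where
  "rst X T = (\<lambda>i. if i \<in> T then X i else 0)"

definition anti :: "(nat \<Rightarrow> nat) \<Rightarrow> (nat \<Rightarrow> nat) \<Rightarrow> bool" where
  "anti X Y = (\<exists>i. X i \<noteq> 0 \<and> Y i \<noteq> 0 \<and> X i \<noteq> Y i)"

lemma supp_paulis: "X \<in> paulis n \<Longrightarrow> supp X \<subseteq> {..<n}"
  by (auto simp: paulis_def supp_def) (metis not_le neq0_conv)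

lemma finite_supp: "X \<in> paulis n \<Longrightarrow> finite (supp X)"
  using supp_paulis finite_subset by blast

lemma rst_self: "q = rst Y S \<Longrightarrow> rst Y (supp q) = q"
  by (auto simp: rst_def supp_def fun_eq_iff)

lemma supp_rst: "supp (rst X T) \<subseteq> supp X" "supp (rst X T) \<subseteq> T"
  by (auto simp: rst_def supp_def)

lemma rst_inter: "rst X T = rst X (T \<inter> supp X)"
  by (auto simp: rst_def supp_def fun_eq_iff)

lemma rst_paulis: "X \<in> paulis n \<Longrightarrow> rst X T \<in> paulis n"
  by (auto simp: rst_def paulis_def)

lemma pmul_cancel: "X \<in> paulis n \<Longrightarrow> Z \<in> paulis n \<Longrightarrow> pmul X (pmul X Z) = Z"
  by (auto simp: pmul_def fun_eq_iff lmul_cancel paulis_lt4)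

lemma pmul_comm: "pmul X Y = pmul Y X"
  by (auto simp: pmul_def fun_eq_iff lmul_comm)

lemma pmul_solve: "X \<in> paulis n \<Longrightarrow> Y \<in> paulis n \<Longrightarrow> pmul X Y = Z \<Longrightarrow> Y = pmul X Z"
  using pmul_cancel[of X n Y] by simp

lemma supp_pmul: "supp (pmul X Y) \<subseteq> supp X \<union> supp Y"
  by (auto simp: supp_def pmul_def lmul_def)

lemma overlap_inner:
  fixes f :: "'a \<Rightarrow> real"
  assumes I: "finite I" and S: "finite S" and f: "\<And>x. x \<in> I \<Longrightarrow> f x \<ge> 0"
  shows "(\<Sum>x\<in>{x\<in>I. SA x \<inter> S \<noteq> {}}. f x) \<le> (\<Sum>j\<in>S. \<Sum>x\<in>{x\<in>I. j \<in> SA x}. f x)"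
proof -
  have "(\<Sum>j\<in>S. \<Sum>x\<in>{x\<in>I. j \<in> SA x}. f x) = (\<Sum>x\<in>I. \<Sum>j\<in>{j\<in>S. j \<in> SA x}. f x)"
    using sum.swap_restrict[OF S I, of "\<lambda>j x. f x" "\<lambda>j x. j \<in> SA x"] by simp
  also have "\<dots> = (\<Sum>x\<in>I. real (card {j\<in>S. j \<in> SA x}) * f x)" by simp
  finally have R: "(\<Sum>j\<in>S. \<Sum>x\<in>{x\<in>I. j \<in> SA x}. f x) = (\<Sum>x\<in>I. real (card {j\<in>S. j \<in> SA x}) * f x)" .
  have "(\<Sum>x\<in>{x\<in>I. SA x \<inter> S \<noteq> {}}. f x) = (\<Sum>x\<in>I. if SA x \<inter> S \<noteq> {} then f x else 0)"
    using I by (simp add: sum.inter_filter)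
  also have "\<dots> \<le> (\<Sum>x\<in>I. real (card {j\<in>S. j \<in> SA x}) * f x)"
  proof (rule sum_mono)
    fix x assume x: "x \<in> I"
    show "(if SA x \<inter> S \<noteq> {} then f x else 0) \<le> real (card {j\<in>S. j \<in> SA x}) * f x"
    proof (cases "SA x \<inter> S \<noteq> {}")
      case True
      then have "{j\<in>S. j \<in> SA x} \<noteq> {}" by auto
      moreover have "finite {j\<in>S. j \<in> SA x}" using S by simp
      ultimately have "card {j\<in>S. j \<in> SA x} \<ge> 1" by (simp add: Suc_le_eq card_gt_0_iff)
      then show ?thesis using True f[OF x] by (simp add: mult_le_cancel_right1)
    next
      case False then show ?thesis using f[OF x] by simp
    qed
  qed
  finally show ?thesis using R by simp
qed

lemma overlap_sum1:
  fixes f :: "'a \<Rightarrow> real" and g :: "'b \<Rightarrow> real"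
  assumes I: "finite I" and J: "finite J" and f: "\<And>x. x \<in> I \<Longrightarrow> f x \<ge> 0"
    and g: "\<And>y. y \<in> J \<Longrightarrow> g y \<ge> 0" and SB: "\<And>y. y \<in> J \<Longrightarrow> finite (SB y)"
  shows "(\<Sum>p\<in>{p\<in>I \<times> J. SA (fst p) \<inter> SB (snd p) \<noteq> {} \<and> \<Phi> (snd p)}. f (fst p) * g (snd p))
     \<le> (\<Sum>y\<in>{y\<in>J. \<Phi> y}. g y * (\<Sum>j\<in>SB y. \<Sum>x\<in>{x\<in>I. j \<in> SA x}. f x))"
proof -
  have eq: "{p\<in>I \<times> J. SA (fst p) \<inter> SB (snd p) \<noteq> {} \<and> \<Phi> (snd p)}
      = (SIGMA x:I. {y\<in>J. SA x \<inter> SB y \<noteq> {} \<and> \<Phi> y})" by auto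
  have "(\<Sum>p\<in>{p\<in>I \<times> J. SA (fst p) \<inter> SB (snd p) \<noteq> {} \<and> \<Phi> (snd p)}. f (fst p) * g (snd p))
      = (\<Sum>x\<in>I. \<Sum>y\<in>{y\<in>J. SA x \<inter> SB y \<noteq> {} \<and> \<Phi> y}. f x * g y)"
    unfolding eq using I J by (subst sum.Sigma) (auto simp: case_prod_beta)
  also have "\<dots> = (\<Sum>y\<in>J. \<Sum>x\<in>{x\<in>I. SA x \<inter> SB y \<noteq> {} \<and> \<Phi> y}. f x * g y)"
    by (rule sum.swap_restrict[OF I J])
  also have "\<dots> \<le> (\<Sum>y\<in>J. if \<Phi> y then g y * (\<Sum>j\<in>SB y. \<Sum>x\<in>{x\<in>I. j \<in> SA x}. f x) else 0)"
  proof (rule sum_mono)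
    fix y assume y: "y \<in> J"
    show "(\<Sum>x\<in>{x\<in>I. SA x \<inter> SB y \<noteq> {} \<and> \<Phi> y}. f x * g y)
        \<le> (if \<Phi> y then g y * (\<Sum>j\<in>SB y. \<Sum>x\<in>{x\<in>I. j \<in> SA x}. f x) else 0)"
    proof (cases "\<Phi> y")
      case True
      have "(\<Sum>x\<in>{x\<in>I. SA x \<inter> SB y \<noteq> {} \<and> \<Phi> y}. f x * g y) = g y * (\<Sum>x\<in>{x\<in>I. SA x \<inter> SB y \<noteq> {}}. f x)"
        using True by (simp add: sum_distrib_left mult.commute)
      also have "\<dots> \<le> g y * (\<Sum>j\<in>SB y. \<Sum>x\<in>{x\<in>I. j \<in> SA x}. f x)"
        by (intro mult_left_mono overlap_inner I SB y f g) auto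
      finally show ?thesis using True by simp
    qed simp
  qed
  also have "\<dots> = (\<Sum>y\<in>{y\<in>J. \<Phi> y}. g y * (\<Sum>j\<in>SB y. \<Sum>x\<in>{x\<in>I. j \<in> SA x}. f x))"
    using J by (simp add: sum.inter_filter)
  finally show ?thesis .
qed

lemma overlap_sum2:
  fixes f :: "'a \<Rightarrow> real" and g :: "'b \<Rightarrow> real"
  assumes I: "finite I" and J: "finite J" and f: "\<And>x. x \<in> I \<Longrightarrow> f x \<ge> 0"
    and g: "\<And>y. y \<in> J \<Longrightarrow> g y \<ge> 0" and SA: "\<And>x. x \<in> I \<Longrightarrow> finite (SA x)"
  shows "(\<Sum>p\<in>{p\<in>I \<times> J. SA (fst p) \<inter> SB (snd p) \<noteq> {} \<and> \<Phi> (fst p)}. f (fst p) * g (snd p))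
     \<le> (\<Sum>x\<in>{x\<in>I. \<Phi> x}. f x * (\<Sum>j\<in>SA x. \<Sum>y\<in>{y\<in>J. j \<in> SB y}. g y))"
proof -
  have eq: "{p\<in>I \<times> J. SA (fst p) \<inter> SB (snd p) \<noteq> {} \<and> \<Phi> (fst p)}
      = (SIGMA x:I. {y\<in>J. SB y \<inter> SA x \<noteq> {} \<and> \<Phi> x})" by auto
  have "(\<Sum>p\<in>{p\<in>I \<times> J. SA (fst p) \<inter> SB (snd p) \<noteq> {} \<and> \<Phi> (fst p)}. f (fst p) * g (snd p))
      = (\<Sum>x\<in>I. \<Sum>y\<in>{y\<in>J. SB y \<inter> SA x \<noteq> {} \<and> \<Phi> x}. f x * g y)"
    unfolding eq using I J by (subst sum.Sigma) (auto simp: case_prod_beta)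
  also have "\<dots> \<le> (\<Sum>x\<in>I. if \<Phi> x then f x * (\<Sum>j\<in>SA x. \<Sum>y\<in>{y\<in>J. j \<in> SB y}. g y) else 0)"
  proof (rule sum_mono)
    fix x assume x: "x \<in> I"
    show "(\<Sum>y\<in>{y\<in>J. SB y \<inter> SA x \<noteq> {} \<and> \<Phi> x}. f x * g y)
        \<le> (if \<Phi> x then f x * (\<Sum>j\<in>SA x. \<Sum>y\<in>{y\<in>J. j \<in> SB y}. g y) else 0)"
    proof (cases "\<Phi> x")
      case True
      have "(\<Sum>y\<in>{y\<in>J. SB y \<inter> SA x \<noteq> {} \<and> \<Phi> x}. f x * g y) = f x * (\<Sum>y\<in>{y\<in>J. SB y \<inter> SA x \<noteq> {}}. g y)"
        using True by (simp add: sum_distrib_left)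
      also have "\<dots> \<le> f x * (\<Sum>j\<in>SA x. \<Sum>y\<in>{y\<in>J. j \<in> SB y}. g y)"
        by (intro mult_left_mono overlap_inner J SA x f g) auto
      finally show ?thesis using True by simp
    qed simp
  qed
  also have "\<dots> = (\<Sum>x\<in>{x\<in>I. \<Phi> x}. f x * (\<Sum>j\<in>SA x. \<Sum>y\<in>{y\<in>J. j \<in> SB y}. g y))"
    using I by (simp add: sum.inter_filter)
  finally show ?thesis .
qed

definition aZ :: "nat \<Rightarrow> ((nat \<Rightarrow> nat) \<Rightarrow> real) \<Rightarrow> ((nat \<Rightarrow> nat) \<Rightarrow> real) \<Rightarrow> (nat \<Rightarrow> nat) \<Rightarrow> real" where
  "aZ n lam mu Z = (\<Sum>X\<in>paulis n. \<Sum>Y\<in>paulis n.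
    if pmul X Y = Z \<and> anti X Y then \<bar>lam X\<bar> * \<bar>mu Y\<bar> else 0)"

context
  fixes n k k' :: nat and lam mu :: "(nat \<Rightarrow> nat) \<Rightarrow> real"
  assumes hA: "\<And>X. lam X \<noteq> 0 \<Longrightarrow> X \<in> paulis n \<and> card (supp X) \<le> k"
      and hB: "\<And>Y. mu Y \<noteq> 0 \<Longrightarrow> Y \<in> paulis n \<and> card (supp Y) \<le> k'"
begin

definition "AA = {X \<in> paulis n. lam X \<noteq> 0}"
definition "BB = {Y \<in> paulis n. mu Y \<noteq> 0}"
definition "TZ Z = {X \<in> AA. pmul X Z \<in> BB \<and> anti X (pmul X Z)}"
definition "RZ Z = (\<lambda>X. rst X (supp Z)) ` TZ Z"
definition "Lf r = (\<Sum>X\<in>{X\<in>AA. rst X (supp r) = r}. (lam X)\<^sup>2)"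
definition "Kf q = (\<Sum>Y\<in>{Y\<in>BB. rst Y (supp q) = q \<and> card (supp Y - supp q) \<le> k}. (mu Y)\<^sup>2)"
definition "RA = (\<lambda>(X, T). rst X T) ` (SIGMA X:AA. Pow (supp X))"
definition "QB = (\<lambda>(Y, T). rst Y T) ` (SIGMA Y:BB. Pow (supp Y))"
definition "Pairs = {p \<in> RA \<times> QB. supp (fst p) \<inter> supp (snd p) \<noteq> {}}"

lemma AA_sub: "AA \<subseteq> paulis n" and BB_sub: "BB \<subseteq> paulis n"
  by (auto simp: AA_def BB_def)

lemma fin_AA: "finite AA" and fin_BB: "finite BB"
  using AA_sub BB_sub finite_paulis finite_subset by blast+

lemma AA_k: "X \<in> AA \<Longrightarrow> card (supp X) \<le> k" using hA by (auto simp: AA_def)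
lemma BB_k: "Y \<in> BB \<Longrightarrow> card (supp Y) \<le> k'" using hB by (auto simp: BB_def)

lemma fin_RA: "finite RA"
  unfolding RA_def using fin_AA AA_sub by (intro finite_imageI finite_SigmaI) (auto intro: finite_supp)
lemma fin_QB: "finite QB"
  unfolding QB_def using fin_BB BB_sub by (intro finite_imageI finite_SigmaI) (auto intro: finite_supp)

lemma RA_paulis: "r \<in> RA \<Longrightarrow> r \<in> paulis n"
  using AA_sub by (auto simp: RA_def intro: rst_paulis)
lemma QB_paulis: "q \<in> QB \<Longrightarrow> q \<in> paulis n"
  using BB_sub by (auto simp: QB_def intro: rst_paulis)

lemma fin_supp_QB: "q \<in> QB \<Longrightarrow> finite (supp q)" using QB_paulis finite_supp by blast
lemma fin_supp_RA: "r \<in> RA \<Longrightarrow> finite (supp r)" using RA_paulis finite_supp by blast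

lemma RA_k: "r \<in> RA \<Longrightarrow> card (supp r) \<le> k"
proof -
  assume "r \<in> RA"
  then obtain X T where X: "X \<in> AA" and r: "r = rst X T" by (auto simp: RA_def)
  have "card (supp r) \<le> card (supp X)"
    using X AA_sub r supp_rst(1) by (intro card_mono) (auto intro: finite_supp)
  then show ?thesis using AA_k[OF X] by simp
qed

lemma QB_k: "q \<in> QB \<Longrightarrow> card (supp q) \<le> k'"
proof -
  assume "q \<in> QB"
  then obtain Y T where Y: "Y \<in> BB" and q: "q = rst Y T" by (auto simp: QB_def)
  have "card (supp q) \<le> card (supp Y)"
    using Y BB_sub q supp_rst(1) by (intro card_mono) (auto intro: finite_supp)
  then show ?thesis using BB_k[OF Y] by simp
qed

lemma TZ_sub: "TZ Z \<subseteq> AA" by (auto simp: TZ_def)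
lemma fin_TZ: "finite (TZ Z)" using TZ_sub fin_AA finite_subset by blast
lemma fin_RZ: "finite (RZ Z)" unfolding RZ_def using fin_TZ by simp

lemma Lf_nonneg: "Lf r \<ge> 0" unfolding Lf_def by (intro sum_nonneg) auto
lemma Kf_nonneg: "Kf q \<ge> 0" unfolding Kf_def by (intro sum_nonneg) auto

lemma aZ_eq:
  assumes Z: "Z \<in> paulis n"
  shows "aZ n lam mu Z = (\<Sum>X\<in>TZ Z. \<bar>lam X\<bar> * \<bar>mu (pmul X Z)\<bar>)"
proof -
  have inner: "(\<Sum>Y\<in>paulis n. if pmul X Y = Z \<and> anti X Y then \<bar>lam X\<bar> * \<bar>mu Y\<bar> else 0)
      = (if X \<in> TZ Z then \<bar>lam X\<bar> * \<bar>mu (pmul X Z)\<bar> else 0)" if X: "X \<in> paulis n" for X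
  proof -
    have XZ: "pmul X Z \<in> paulis n" using X Z by (rule pmul_paulis)
    have "(\<Sum>Y\<in>paulis n. if pmul X Y = Z \<and> anti X Y then \<bar>lam X\<bar> * \<bar>mu Y\<bar> else 0)
        = (\<Sum>Y\<in>paulis n. if Y = pmul X Z then (if anti X Y then \<bar>lam X\<bar> * \<bar>mu Y\<bar> else 0) else 0)"
    proof (intro sum.cong refl)
      fix Y assume Y: "Y \<in> paulis n"
      have "pmul X Y = Z \<longleftrightarrow> Y = pmul X Z"
        using pmul_solve[OF X Y] pmul_cancel[OF X Y] pmul_cancel[OF X Z] by auto
      then show "(if pmul X Y = Z \<and> anti X Y then \<bar>lam X\<bar> * \<bar>mu Y\<bar> else 0)
        = (if Y = pmul X Z then (if anti X Y then \<bar>lam X\<bar> * \<bar>mu Y\<bar> else 0) else 0)" by auto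
    qed
    also have "\<dots> = (if anti X (pmul X Z) then \<bar>lam X\<bar> * \<bar>mu (pmul X Z)\<bar> else 0)"
      using XZ finite_paulis by (simp add: sum.delta')
    also have "\<dots> = (if X \<in> TZ Z then \<bar>lam X\<bar> * \<bar>mu (pmul X Z)\<bar> else 0)"
      using X XZ by (auto simp: TZ_def AA_def BB_def)
    finally show ?thesis .
  qed
  have "aZ n lam mu Z = (\<Sum>X\<in>paulis n. if X \<in> TZ Z then \<bar>lam X\<bar> * \<bar>mu (pmul X Z)\<bar> else 0)"
    unfolding aZ_def by (intro sum.cong refl inner)
  also have "\<dots> = (\<Sum>X\<in>TZ Z. \<bar>lam X\<bar> * \<bar>mu (pmul X Z)\<bar>)"
    using finite_paulis TZ_sub AA_sub
    by (intro sum.mono_neutral_cong_right) auto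
  finally show ?thesis .
qed

lemma q_eq:
  assumes "X \<in> paulis n" "Z \<in> paulis n"
  shows "pmul (rst X (supp Z)) Z = rst (pmul X Z) (supp Z)"
  by (auto simp: pmul_def rst_def supp_def fun_eq_iff lmul_0)

lemma anti_supp:
  assumes "anti X (pmul X Z)"
  shows "\<exists>i. i \<in> supp Z \<and> X i \<noteq> 0 \<and> pmul X Z i \<noteq> 0"
  using assms unfolding anti_def supp_def pmul_def
  by (metis lmul_0(1) mem_Collect_eq)


lemma TZ_facts:
  assumes X: "X \<in> TZ Z" and Z: "Z \<in> paulis n"
  shows "X \<in> AA" "X \<in> paulis n" "pmul X Z \<in> BB" "pmul X Z \<in> paulis n"
    "rst (pmul X Z) (supp (pmul (rst X (supp Z)) Z)) = pmul (rst X (supp Z)) Z"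
    "supp (pmul X Z) - supp (pmul (rst X (supp Z)) Z) \<subseteq> supp X"
    "card (supp (pmul X Z) - supp (pmul (rst X (supp Z)) Z)) \<le> k"
proof -
  show XA: "X \<in> AA" and XP: "X \<in> paulis n" "pmul X Z \<in> BB" "pmul X Z \<in> paulis n"
    using X AA_sub BB_sub by (auto simp: TZ_def)
  have qe: "pmul (rst X (supp Z)) Z = rst (pmul X Z) (supp Z)" using q_eq XP Z by blast
  show "rst (pmul X Z) (supp (pmul (rst X (supp Z)) Z)) = pmul (rst X (supp Z)) Z"
    using rst_self[OF qe] .
  show sub: "supp (pmul X Z) - supp (pmul (rst X (supp Z)) Z) \<subseteq> supp X"
    unfolding qe by (auto simp: supp_def rst_def pmul_def lmul_0)
  have "card (supp (pmul X Z) - supp (pmul (rst X (supp Z)) Z)) \<le> card (supp X)"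
    using sub XP finite_supp by (intro card_mono) auto
  then show "card (supp (pmul X Z) - supp (pmul (rst X (supp Z)) Z)) \<le> k" using AA_k[OF XA] by simp
qed

lemma aZ_bound:
  assumes Z: "Z \<in> paulis n"
  shows "(aZ n lam mu Z)\<^sup>2 \<le> real (card (RZ Z)) * (\<Sum>r\<in>RZ Z. Lf r * Kf (pmul r Z))"
proof -
  define W where "W r = {X \<in> TZ Z. rst X (supp Z) = r}" for r
  define f where "f X = \<bar>lam X\<bar> * \<bar>mu (pmul X Z)\<bar>" for X
  have "aZ n lam mu Z = (\<Sum>r\<in>RZ Z. \<Sum>X\<in>W r. f X)"
    unfolding aZ_eq[OF Z] RZ_def W_def f_def
    by (rule sum.image_gen[OF fin_TZ])
  then have "(aZ n lam mu Z)\<^sup>2 \<le> real (card (RZ Z)) * (\<Sum>r\<in>RZ Z. (\<Sum>X\<in>W r. f X)\<^sup>2)"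
    using CS_card by simp
  also have "\<dots> \<le> real (card (RZ Z)) * (\<Sum>r\<in>RZ Z. Lf r * Kf (pmul r Z))"
  proof (intro mult_left_mono sum_mono)
    fix r assume r: "r \<in> RZ Z"
    have finW: "finite (W r)" using fin_TZ by (simp add: W_def)
    have "(\<Sum>X\<in>W r. f X)\<^sup>2 \<le> (\<Sum>X\<in>W r. \<bar>lam X\<bar>\<^sup>2) * (\<Sum>X\<in>W r. \<bar>mu (pmul X Z)\<bar>\<^sup>2)"
      unfolding f_def by (rule CS_sum)
    also have "\<dots> \<le> Lf r * Kf (pmul r Z)"
    proof (rule mult_mono)
      have "(\<Sum>X\<in>W r. \<bar>lam X\<bar>\<^sup>2) = (\<Sum>X\<in>W r. (lam X)\<^sup>2)" by simp
      also have "\<dots> \<le> Lf r"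
        unfolding Lf_def
      proof (rule sum_mono2)
        show "finite {X \<in> AA. rst X (supp r) = r}" using fin_AA by simp
        show "W r \<subseteq> {X \<in> AA. rst X (supp r) = r}"
          using TZ_sub by (auto simp: W_def intro: rst_self)
      qed auto
      finally show "(\<Sum>X\<in>W r. \<bar>lam X\<bar>\<^sup>2) \<le> Lf r" .
      show "(\<Sum>X\<in>W r. \<bar>mu (pmul X Z)\<bar>\<^sup>2) \<le> Kf (pmul r Z)"
      proof -
        have inj: "inj_on (\<lambda>X. pmul X Z) (W r)"
        proof (rule inj_onI)
          fix X1 X2 assume "X1 \<in> W r" "X2 \<in> W r" "pmul X1 Z = pmul X2 Z"
          then have "pmul Z (pmul Z X1) = pmul Z (pmul Z X2)" "X1 \<in> paulis n" "X2 \<in> paulis n"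
            using TZ_sub AA_sub by (auto simp: W_def pmul_comm)
          then show "X1 = X2" using pmul_cancel[OF Z] by metis
        qed
        have "(\<Sum>X\<in>W r. \<bar>mu (pmul X Z)\<bar>\<^sup>2) = (\<Sum>Y\<in>(\<lambda>X. pmul X Z) ` W r. (mu Y)\<^sup>2)"
          by (simp add: sum.reindex[OF inj])
        also have "\<dots> \<le> Kf (pmul r Z)"
          unfolding Kf_def
        proof (rule sum_mono2)
          show "finite {Y \<in> BB. rst Y (supp (pmul r Z)) = pmul r Z \<and> card (supp Y - supp (pmul r Z)) \<le> k}"
            using fin_BB by simp
          show "(\<lambda>X. pmul X Z) ` W r \<subseteq> {Y \<in> BB. rst Y (supp (pmul r Z)) = pmul r Z \<and> card (supp Y - supp (pmul r Z)) \<le> k}"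
          proof
            fix Y assume "Y \<in> (\<lambda>X. pmul X Z) ` W r"
            then obtain X where X: "X \<in> TZ Z" "r = rst X (supp Z)" "Y = pmul X Z" by (auto simp: W_def)
            show "Y \<in> {Y \<in> BB. rst Y (supp (pmul r Z)) = pmul r Z \<and> card (supp Y - supp (pmul r Z)) \<le> k}"
              using TZ_facts[OF X(1) Z] X by simp
          qed
        qed auto
        finally show ?thesis .
      qed
    qed (auto intro: sum_nonneg Lf_nonneg)
    finally show "(\<Sum>X\<in>W r. f X)\<^sup>2 \<le> Lf r * Kf (pmul r Z)" .
  qed simp
  finally show ?thesis .
qed

lemma card_RZ:
  assumes Z: "Z \<in> paulis n"
  shows "card (RZ Z) \<le> (3 * (k + k') + 1)^k"
proof (cases "TZ Z = {}")
  case True then show ?thesis by (simp add: RZ_def)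
next
  case False
  then obtain X0 where X0: "X0 \<in> TZ Z" by auto
  have X0P: "X0 \<in> paulis n" and Y0: "pmul X0 Z \<in> BB" using TZ_facts[OF X0 Z] by auto
  have "Z = pmul X0 (pmul X0 Z)" using pmul_cancel[OF X0P Z] by simp
  then have "supp Z \<subseteq> supp X0 \<union> supp (pmul X0 Z)" using supp_pmul by metis
  then have "card (supp Z) \<le> card (supp X0) + card (supp (pmul X0 Z))"
    by (metis card_Un_le finite_supp X0P BB_sub Y0 subsetD finite_Un card_mono order_trans)
  then have cZ: "card (supp Z) \<le> k + k'"
    using AA_k[OF TZ_facts(1)[OF X0 Z]] BB_k[OF Y0] by simp
  define U where "U = supp Z \<times> {1::nat, 2, 3}"
  have finU: "finite U" using finite_supp[OF Z] by (simp add: U_def)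
  have cU: "card U = 3 * card (supp Z)" by (simp add: U_def card_cartesian_product)
  define gr where "gr r = (\<lambda>i. (i, r i)) ` supp r" for r :: "nat \<Rightarrow> nat"
  have inj: "inj_on gr (RZ Z)"
  proof (rule inj_onI)
    fix r1 r2 assume "r1 \<in> RZ Z" "r2 \<in> RZ Z" and e: "gr r1 = gr r2"
    show "r1 = r2"
    proof
      fix i
      show "r1 i = r2 i"
      proof (cases "r1 i = 0")
        case True
        show ?thesis
        proof (rule ccontr)
          assume "r1 i \<noteq> r2 i"
          then have "(i, r2 i) \<in> gr r2" using True by (auto simp: gr_def supp_def)
          then have "(i, r2 i) \<in> gr r1" using e by simp
          then show False using True \<open>r1 i \<noteq> r2 i\<close> by (auto simp: gr_def supp_def)
        qed
      next
        case False
        then have "(i, r1 i) \<in> gr r1" by (auto simp: gr_def supp_def)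
        then have "(i, r1 i) \<in> gr r2" using e by simp
        then show ?thesis by (auto simp: gr_def)
      qed
    qed
  qed
  have img: "gr ` RZ Z \<subseteq> {T. T \<subseteq> U \<and> card T \<le> k}"
  proof
    fix T assume "T \<in> gr ` RZ Z"
    then obtain X where X: "X \<in> TZ Z" and T: "T = gr (rst X (supp Z))" by (auto simp: RZ_def)
    have XP: "X \<in> paulis n" and XA: "X \<in> AA" using TZ_facts[OF X Z] by auto
    have "T \<subseteq> U"
    proof
      fix p assume "p \<in> T"
      then obtain i where "i \<in> supp (rst X (supp Z))" "p = (i, rst X (supp Z) i)" using T by (auto simp: gr_def)
      moreover have "X i < 4" using paulis_lt4[OF XP] .
      ultimately show "p \<in> U" by (auto simp: U_def supp_def rst_def split: if_splits)
    qed
    moreover have "card T \<le> k"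
    proof -
      have "card T \<le> card (supp (rst X (supp Z)))" unfolding T gr_def by (rule card_image_le)
          (meson XP finite_subset finite_supp supp_rst(1))
      also have "\<dots> \<le> card (supp X)" using XP finite_supp supp_rst(1) by (intro card_mono) auto
      also have "\<dots> \<le> k" using AA_k[OF XA] .
      finally show ?thesis .
    qed
    ultimately show "T \<in> {T. T \<subseteq> U \<and> card T \<le> k}" by simp
  qed
  have "card (RZ Z) = card (gr ` RZ Z)" using inj by (simp add: card_image)
  also have "\<dots> \<le> card {T. T \<subseteq> U \<and> card T \<le> k}"
    using img finU by (intro card_mono) auto
  also have "\<dots> \<le> (card U + 1)^k" by (rule card_small_subsets[OF finU])
  also have "\<dots> \<le> (3 * (k + k') + 1)^k" using cZ cU by (intro power_mono) auto
  finally show ?thesis .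
qed


lemma sum_aZ:
  assumes Zs: "Zs \<subseteq> paulis n"
  shows "(\<Sum>Z\<in>Zs. (aZ n lam mu Z)\<^sup>2) \<le> real ((3 * (k + k') + 1)^k) *
     (\<Sum>p\<in>{p\<in>Pairs. pmul (fst p) (snd p) \<in> Zs}. Lf (fst p) * Kf (snd p))"
proof -
  define Nm where "Nm = real ((3 * (k + k') + 1)^k)"
  define F where "F p = Lf (fst p) * Kf (snd p)" for p :: "(nat \<Rightarrow> nat) \<times> (nat \<Rightarrow> nat)"
  have finZs: "finite Zs" using Zs finite_paulis finite_subset by blast
  have Fnn: "F p \<ge> 0" for p by (simp add: F_def Lf_nonneg Kf_nonneg)
  have "(\<Sum>Z\<in>Zs. (aZ n lam mu Z)\<^sup>2) \<le> (\<Sum>Z\<in>Zs. Nm * (\<Sum>r\<in>RZ Z. F (r, pmul r Z)))"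
  proof (rule sum_mono)
    fix Z assume "Z \<in> Zs"
    then have Z: "Z \<in> paulis n" using Zs by auto
    have "(aZ n lam mu Z)\<^sup>2 \<le> real (card (RZ Z)) * (\<Sum>r\<in>RZ Z. F (r, pmul r Z))"
      using aZ_bound[OF Z] by (simp add: F_def)
    also have "\<dots> \<le> Nm * (\<Sum>r\<in>RZ Z. F (r, pmul r Z))"
    proof (rule mult_right_mono)
      show "real (card (RZ Z)) \<le> Nm" unfolding Nm_def using card_RZ[OF Z] of_nat_le_iff by blast
    qed (intro sum_nonneg Fnn)
    finally show "(aZ n lam mu Z)\<^sup>2 \<le> Nm * (\<Sum>r\<in>RZ Z. F (r, pmul r Z))" .
  qed
  also have "\<dots> = Nm * (\<Sum>zr\<in>(SIGMA Z:Zs. RZ Z). F (snd zr, pmul (snd zr) (fst zr)))"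
    by (simp add: sum_distrib_left[symmetric] sum.Sigma[OF finZs] fin_RZ case_prod_beta)
  also have "\<dots> \<le> Nm * (\<Sum>p\<in>{p\<in>Pairs. pmul (fst p) (snd p) \<in> Zs}. F p)"
  proof (rule mult_left_mono)
    let ?phi = "\<lambda>zr. (snd zr, pmul (snd zr) (fst zr))"
    have memb: "snd zr \<in> paulis n \<and> fst zr \<in> paulis n" if "zr \<in> (SIGMA Z:Zs. RZ Z)" for zr
    proof -
      obtain Z r where zr0: "zr = (Z, r)" by (cases zr)
      then have zr: "zr = (Z, r)" "Z \<in> Zs" "r \<in> RZ Z" using that by auto
      then obtain X where X: "X \<in> TZ Z" "r = rst X (supp Z)" by (auto simp: RZ_def)
      have "X \<in> paulis n" using X TZ_sub AA_sub by auto
      then show ?thesis using zr X Zs by (auto intro: rst_paulis)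
    qed
    have inj: "inj_on ?phi (SIGMA Z:Zs. RZ Z)"
    proof (rule inj_onI)
      fix zr1 zr2 assume a: "zr1 \<in> (SIGMA Z:Zs. RZ Z)" "zr2 \<in> (SIGMA Z:Zs. RZ Z)" "?phi zr1 = ?phi zr2"
      then have "snd zr1 = snd zr2" by simp
      moreover have "fst zr1 = fst zr2"
        using a memb[OF a(1)] memb[OF a(2)] pmul_cancel by (metis prod.inject)
      ultimately show "zr1 = zr2" by (simp add: prod_eq_iff)
    qed
    have sub: "?phi ` (SIGMA Z:Zs. RZ Z) \<subseteq> {p\<in>Pairs. pmul (fst p) (snd p) \<in> Zs}"
    proof
      fix p assume "p \<in> ?phi ` (SIGMA Z:Zs. RZ Z)"
      then obtain Z r where Zr: "Z \<in> Zs" "r \<in> RZ Z" "p = (r, pmul r Z)" by auto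
      then obtain X where X: "X \<in> TZ Z" "r = rst X (supp Z)" by (auto simp: RZ_def)
      have Z: "Z \<in> paulis n" using Zr Zs by auto
      have XA: "X \<in> AA" and XP: "X \<in> paulis n" and YB: "pmul X Z \<in> BB" using TZ_facts[OF X(1) Z] by auto
      have qe: "pmul r Z = rst (pmul X Z) (supp Z)" using q_eq[OF XP Z] X by simp
      have rA: "r \<in> RA" unfolding RA_def using XA X(2) rst_inter[of X "supp Z"]
        by (intro image_eqI[where x="(X, supp Z \<inter> supp X)"]) auto
      have qB: "pmul r Z \<in> QB" unfolding QB_def using YB qe rst_inter[of "pmul X Z" "supp Z"]
        by (intro image_eqI[where x="(pmul X Z, supp Z \<inter> supp (pmul X Z))"]) auto
      have "anti X (pmul X Z)" using X by (simp add: TZ_def)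
      then obtain i where i: "i \<in> supp Z" "X i \<noteq> 0" "pmul X Z i \<noteq> 0" using anti_supp by blast
      then have "i \<in> supp r \<inter> supp (pmul r Z)" using X(2) qe by (auto simp: supp_def rst_def)
      then have "p \<in> Pairs" using Zr rA qB by (auto simp: Pairs_def)
      moreover have "pmul (fst p) (snd p) = Z"
        using Zr pmul_cancel[of r n Z] memb[of "(Z, r)"] by auto
      ultimately show "p \<in> {p\<in>Pairs. pmul (fst p) (snd p) \<in> Zs}" using Zr by simp
    qed
    have finP: "finite {p\<in>Pairs. pmul (fst p) (snd p) \<in> Zs}"
      using fin_RA fin_QB by (simp add: Pairs_def)
    have "(\<Sum>zr\<in>(SIGMA Z:Zs. RZ Z). F (?phi zr)) = (\<Sum>p\<in>?phi ` (SIGMA Z:Zs. RZ Z). F p)"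
      by (simp add: sum.reindex[OF inj])
    also have "\<dots> \<le> (\<Sum>p\<in>{p\<in>Pairs. pmul (fst p) (snd p) \<in> Zs}. F p)"
      using finP sub Fnn by (intro sum_mono2) auto
    finally show "(\<Sum>zr\<in>(SIGMA Z:Zs. RZ Z). F (snd zr, pmul (snd zr) (fst zr)))
        \<le> (\<Sum>p\<in>{p\<in>Pairs. pmul (fst p) (snd p) \<in> Zs}. F p)" .
  qed (simp add: Nm_def)
  finally show ?thesis by (simp add: Nm_def F_def)
qed

lemma sumL:
  assumes hh: "\<And>j. (\<Sum>X\<in>{X\<in>paulis n. j \<in> supp X}. (lam X)\<^sup>2) \<le> hh"
  shows "(\<Sum>r\<in>{r\<in>RA. j \<in> supp r}. Lf r) \<le> 2^k * hh"
proof -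
  have "(\<Sum>r\<in>{r\<in>RA. j \<in> supp r}. Lf r)
      = (\<Sum>r\<in>{r\<in>RA. j \<in> supp r}. \<Sum>X\<in>{X\<in>AA. rst X (supp r) = r}. (lam X)\<^sup>2)"
    by (simp add: Lf_def)
  also have "\<dots> = (\<Sum>X\<in>AA. \<Sum>r\<in>{r\<in>{r\<in>RA. j \<in> supp r}. rst X (supp r) = r}. (lam X)\<^sup>2)"
    by (rule sum.swap_restrict) (use fin_RA fin_AA in auto)
  also have "\<dots> \<le> (\<Sum>X\<in>AA. if j \<in> supp X then 2^k * (lam X)\<^sup>2 else 0)"
  proof (rule sum_mono)
    fix X assume XA: "X \<in> AA"
    have XP: "X \<in> paulis n" using XA AA_sub by auto
    let ?S = "{r\<in>{r\<in>RA. j \<in> supp r}. rst X (supp r) = r}"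
    have S_sub: "?S \<subseteq> rst X ` Pow (supp X)"
    proof
      fix r assume r: "r \<in> ?S"
      then have "supp r \<subseteq> supp X" using supp_rst(1)[of X "supp r"] by auto
      then show "r \<in> rst X ` Pow (supp X)" using r by (intro image_eqI[where x="supp r"]) auto
    qed
    have cS: "card ?S \<le> 2^k"
    proof -
      have "card ?S \<le> card (rst X ` Pow (supp X))"
        using S_sub finite_supp[OF XP] by (intro card_mono) auto
      also have "\<dots> \<le> card (Pow (supp X))" using finite_supp[OF XP] by (intro card_image_le) auto
      also have "\<dots> = 2^card (supp X)" using finite_supp[OF XP] by (simp add: card_Pow)
      also have "\<dots> \<le> 2^k" using AA_k[OF XA] by (intro power_increasing) auto
      finally show ?thesis .
    qed
    show "(\<Sum>r\<in>?S. (lam X)\<^sup>2) \<le> (if j \<in> supp X then 2^k * (lam X)\<^sup>2 else 0)"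
    proof (cases "j \<in> supp X")
      case True
      have c0: "real (card ?S) \<le> real (2^k)" using cS of_nat_le_iff by blast
      have c: "real (card ?S) \<le> 2^k" using c0 by simp
      have "(\<Sum>r\<in>?S. (lam X)\<^sup>2) = real (card ?S) * (lam X)\<^sup>2" by (rule sum_constant)
      also have "\<dots> \<le> 2^k * (lam X)\<^sup>2" by (rule mult_right_mono[OF c]) simp
      finally show ?thesis using True by (simp only: if_True)
    next
      case False
      have "?S = {}"
      proof (rule ccontr)
        assume "?S \<noteq> {}"
        then obtain r where r: "r \<in> ?S" by blast
        then have "j \<in> supp r" "supp r \<subseteq> supp X" using supp_rst(1)[of X "supp r"] by auto
        then show False using False by auto
      qed
      then show ?thesis using False by (simp only: sum.empty if_False order_refl)
    qed
  qed
  also have "\<dots> = (\<Sum>X\<in>AA. 2^k * (if j \<in> supp X then (lam X)\<^sup>2 else 0))"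
    by (intro sum.cong) auto
  also have "\<dots> = 2^k * (\<Sum>X\<in>{X\<in>AA. j \<in> supp X}. (lam X)\<^sup>2)"
    using fin_AA by (simp only: sum_distrib_left[symmetric] sum.inter_filter)
  also have "\<dots> \<le> 2^k * hh"
  proof (rule mult_left_mono)
    have "(\<Sum>X\<in>{X\<in>AA. j \<in> supp X}. (lam X)\<^sup>2) \<le> (\<Sum>X\<in>{X\<in>paulis n. j \<in> supp X}. (lam X)\<^sup>2)"
      using AA_sub finite_paulis by (intro sum_mono2) auto
    then show "(\<Sum>X\<in>{X\<in>AA. j \<in> supp X}. (lam X)\<^sup>2) \<le> hh" using hh[of j] by simp
  qed simp
  finally show ?thesis .
qed

lemma sumK:
  assumes \<Psi>: "\<And>q Y. rst Y (supp q) = q \<Longrightarrow> \<Psi> q \<Longrightarrow> \<Psi>' Y"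
  shows "(\<Sum>q\<in>{q\<in>QB. \<Psi> q}. Kf q) \<le> real ((k'+1)^k) * (\<Sum>Y\<in>{Y\<in>paulis n. \<Psi>' Y}. (mu Y)\<^sup>2)"
proof -
  have "(\<Sum>q\<in>{q\<in>QB. \<Psi> q}. Kf q)
      = (\<Sum>q\<in>{q\<in>QB. \<Psi> q}. \<Sum>Y\<in>{Y\<in>BB. rst Y (supp q) = q \<and> card (supp Y - supp q) \<le> k}. (mu Y)\<^sup>2)"
    by (simp add: Kf_def)
  also have "\<dots> = (\<Sum>Y\<in>BB. \<Sum>q\<in>{q\<in>{q\<in>QB. \<Psi> q}. rst Y (supp q) = q \<and> card (supp Y - supp q) \<le> k}. (mu Y)\<^sup>2)"
    by (rule sum.swap_restrict) (use fin_QB fin_BB in auto)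
  also have "\<dots> \<le> (\<Sum>Y\<in>BB. if \<Psi>' Y then real ((k'+1)^k) * (mu Y)\<^sup>2 else 0)"
  proof (rule sum_mono)
    fix Y assume YB: "Y \<in> BB"
    have YP: "Y \<in> paulis n" using YB BB_sub by auto
    let ?S = "{q\<in>{q\<in>QB. \<Psi> q}. rst Y (supp q) = q \<and> card (supp Y - supp q) \<le> k}"
    have S_sub: "?S \<subseteq> (\<lambda>T. rst Y (supp Y - T)) ` {T. T \<subseteq> supp Y \<and> card T \<le> k}"
    proof
      fix q assume q: "q \<in> ?S"
      then have sq: "supp q \<subseteq> supp Y" using supp_rst(1)[of Y "supp q"] by auto
      then have "supp Y - (supp Y - supp q) = supp q" by auto
      then show "q \<in> (\<lambda>T. rst Y (supp Y - T)) ` {T. T \<subseteq> supp Y \<and> card T \<le> k}"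
        using q by (intro image_eqI[where x="supp Y - supp q"]) auto
    qed
    have cS: "card ?S \<le> (k'+1)^k"
    proof -
      have "card ?S \<le> card ((\<lambda>T. rst Y (supp Y - T)) ` {T. T \<subseteq> supp Y \<and> card T \<le> k})"
        using S_sub finite_supp[OF YP] by (intro card_mono) auto
      also have "\<dots> \<le> card {T. T \<subseteq> supp Y \<and> card T \<le> k}"
        using finite_supp[OF YP] by (intro card_image_le) auto
      also have "\<dots> \<le> (card (supp Y) + 1)^k" by (rule card_small_subsets[OF finite_supp[OF YP]])
      also have "\<dots> \<le> (k'+1)^k" using BB_k[OF YB] by (intro power_mono) auto
      finally show ?thesis .
    qed
    show "(\<Sum>q\<in>?S. (mu Y)\<^sup>2) \<le> (if \<Psi>' Y then real ((k'+1)^k) * (mu Y)\<^sup>2 else 0)"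
    proof (cases "\<Psi>' Y")
      case True
      have c: "real (card ?S) \<le> real ((k'+1)^k)" using cS by linarith
      have "(\<Sum>q\<in>?S. (mu Y)\<^sup>2) = real (card ?S) * (mu Y)\<^sup>2" by (rule sum_constant)
      also have "\<dots> \<le> real ((k'+1)^k) * (mu Y)\<^sup>2" by (rule mult_right_mono[OF c]) simp
      finally show ?thesis using True by (simp only: if_True)
    next
      case False
      have S0: "?S = {}" using False \<Psi> by blast
      show ?thesis using False by (simp only: S0 sum.empty if_False order_refl)
    qed
  qed
  also have "\<dots> = (\<Sum>Y\<in>BB. real ((k'+1)^k) * (if \<Psi>' Y then (mu Y)\<^sup>2 else 0))"
    by (intro sum.cong) auto
  also have "\<dots> = real ((k'+1)^k) * (\<Sum>Y\<in>{Y\<in>BB. \<Psi>' Y}. (mu Y)\<^sup>2)"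
    using fin_BB by (simp only: sum_distrib_left[symmetric] sum.inter_filter)
  also have "\<dots> \<le> real ((k'+1)^k) * (\<Sum>Y\<in>{Y\<in>paulis n. \<Psi>' Y}. (mu Y)\<^sup>2)"
    using BB_sub finite_paulis by (intro mult_left_mono sum_mono2) auto
  finally show ?thesis .
qed


lemma innerL:
  assumes hh: "\<And>j. (\<Sum>X\<in>{X\<in>paulis n. j \<in> supp X}. (lam X)\<^sup>2) \<le> hh"
    and q: "q \<in> QB"
  shows "(\<Sum>j\<in>supp q. \<Sum>r\<in>{r\<in>RA. j \<in> supp r}. Lf r) \<le> real k' * (2^k * hh)"
proof -
  have hh0: "0 \<le> hh" using hh[of 0] by (meson order_trans sum_nonneg zero_le_power2)
  have "(\<Sum>j\<in>supp q. \<Sum>r\<in>{r\<in>RA. j \<in> supp r}. Lf r) \<le> (\<Sum>j\<in>supp q. 2^k * hh)"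
    by (intro sum_mono sumL hh)
  also have "\<dots> = real (card (supp q)) * (2^k * hh)" by simp
  also have "\<dots> \<le> real k' * (2^k * hh)"
    using QB_k[OF q] hh0 by (intro mult_right_mono) auto
  finally show ?thesis .
qed

lemma sumK_loc:
  assumes gg: "\<And>j. (\<Sum>Y\<in>{Y\<in>paulis n. j \<in> supp Y}. (mu Y)\<^sup>2) \<le> gg"
  shows "(\<Sum>q\<in>{q\<in>QB. j \<in> supp q}. Kf q) \<le> real ((k'+1)^k) * gg"
proof -
  have "(\<Sum>q\<in>{q\<in>QB. j \<in> supp q}. Kf q) \<le> real ((k'+1)^k) * (\<Sum>Y\<in>{Y\<in>paulis n. j \<in> supp Y}. (mu Y)\<^sup>2)"
  proof (rule sumK)
    fix q Y assume "rst Y (supp q) = q" "j \<in> supp q"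
    then show "j \<in> supp Y" using supp_rst(1)[of Y "supp q"] by auto
  qed
  also have "\<dots> \<le> real ((k'+1)^k) * gg" by (intro mult_left_mono gg) simp
  finally show ?thesis .
qed

lemma innerK:
  assumes gg: "\<And>j. (\<Sum>Y\<in>{Y\<in>paulis n. j \<in> supp Y}. (mu Y)\<^sup>2) \<le> gg"
    and r: "r \<in> RA"
  shows "(\<Sum>j\<in>supp r. \<Sum>q\<in>{q\<in>QB. j \<in> supp q}. Kf q) \<le> real k * (real ((k'+1)^k) * gg)"
proof -
  have gg0: "0 \<le> gg" using gg[of 0] by (meson order_trans sum_nonneg zero_le_power2)
  have "(\<Sum>j\<in>supp r. \<Sum>q\<in>{q\<in>QB. j \<in> supp q}. Kf q) \<le> (\<Sum>j\<in>supp r. real ((k'+1)^k) * gg)"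
    by (intro sum_mono sumK_loc gg)
  also have "\<dots> = real (card (supp r)) * (real ((k'+1)^k) * gg)" by simp
  also have "\<dots> \<le> real k * (real ((k'+1)^k) * gg)"
    using RA_k[OF r] gg0 by (intro mult_right_mono) auto
  finally show ?thesis .
qed

lemma coreF:
  assumes hh: "\<And>j. (\<Sum>X\<in>{X\<in>paulis n. j \<in> supp X}. (lam X)\<^sup>2) \<le> hh"
  shows "(\<Sum>Z\<in>paulis n. (aZ n lam mu Z)\<^sup>2) \<le> real ((3 * (k + k') + 1)^k) *
     ((real k' * (2^k * hh)) * (real ((k'+1)^k) * (\<Sum>Y\<in>paulis n. (mu Y)\<^sup>2)))"
proof -
  have hh0: "0 \<le> hh" using hh[of 0] by (meson order_trans sum_nonneg zero_le_power2)
  define F where "F p = Lf (fst p) * Kf (snd p)" for p :: "(nat \<Rightarrow> nat) \<times> (nat \<Rightarrow> nat)"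
  have "(\<Sum>Z\<in>paulis n. (aZ n lam mu Z)\<^sup>2) \<le> real ((3 * (k + k') + 1)^k) *
     (\<Sum>p\<in>{p\<in>Pairs. pmul (fst p) (snd p) \<in> paulis n}. F p)"
    using sum_aZ[of "paulis n"] by (simp add: F_def)
  also have "(\<Sum>p\<in>{p\<in>Pairs. pmul (fst p) (snd p) \<in> paulis n}. F p)
      \<le> (\<Sum>p\<in>{p\<in>RA \<times> QB. supp (fst p) \<inter> supp (snd p) \<noteq> {} \<and> True}. F p)"
    using fin_RA fin_QB by (intro sum_mono2) (auto simp: Pairs_def F_def intro: mult_nonneg_nonneg Lf_nonneg Kf_nonneg)
  also have "\<dots> \<le> (\<Sum>q\<in>{q\<in>QB. True}. Kf q * (\<Sum>j\<in>supp q. \<Sum>r\<in>{r\<in>RA. j \<in> supp r}. Lf r))"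
    unfolding F_def
    by (rule overlap_sum1[where SA=supp and SB=supp and \<Phi>="\<lambda>_. True"])
      (use fin_RA fin_QB Lf_nonneg Kf_nonneg fin_supp_QB in auto)
  also have "\<dots> \<le> (\<Sum>q\<in>{q\<in>QB. True}. Kf q * (real k' * (2^k * hh)))"
    by (intro sum_mono mult_left_mono innerL hh Kf_nonneg) auto
  also have "\<dots> = (real k' * (2^k * hh)) * (\<Sum>q\<in>{q\<in>QB. True}. Kf q)"
    unfolding sum_distrib_left by (intro sum.cong refl) (simp add: mult.commute)
  also have "\<dots> \<le> (real k' * (2^k * hh)) * (real ((k'+1)^k) * (\<Sum>Y\<in>{Y\<in>paulis n. True}. (mu Y)\<^sup>2))"
    using hh0 by (intro mult_left_mono sumK) auto
  finally show ?thesis by (simp add: mult_left_mono)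
qed

lemma coreL:
  assumes hh: "\<And>j. (\<Sum>X\<in>{X\<in>paulis n. j \<in> supp X}. (lam X)\<^sup>2) \<le> hh"
    and gg: "\<And>j. (\<Sum>Y\<in>{Y\<in>paulis n. j \<in> supp Y}. (mu Y)\<^sup>2) \<le> gg"
  shows "(\<Sum>Z\<in>{Z\<in>paulis n. i \<in> supp Z}. (aZ n lam mu Z)\<^sup>2) \<le> real ((3 * (k + k') + 1)^k) *
     (real (k + k') * (2^k * hh) * (real ((k'+1)^k) * gg))"
proof -
  have hh0: "0 \<le> hh" using hh[of 0] by (meson order_trans sum_nonneg zero_le_power2)
  have gg0: "0 \<le> gg" using gg[of 0] by (meson order_trans sum_nonneg zero_le_power2)
  define F where "F p = Lf (fst p) * Kf (snd p)" for p :: "(nat \<Rightarrow> nat) \<times> (nat \<Rightarrow> nat)"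
  have Fnn: "F p \<ge> 0" for p by (simp add: F_def Lf_nonneg Kf_nonneg)
  define S1 where "S1 = {p\<in>RA \<times> QB. supp (fst p) \<inter> supp (snd p) \<noteq> {} \<and> i \<in> supp (fst p)}"
  define S2 where "S2 = {p\<in>RA \<times> QB. supp (fst p) \<inter> supp (snd p) \<noteq> {} \<and> i \<in> supp (snd p)}"
  have finS: "finite S1" "finite S2" using fin_RA fin_QB by (auto simp: S1_def S2_def)
  have "(\<Sum>Z\<in>{Z\<in>paulis n. i \<in> supp Z}. (aZ n lam mu Z)\<^sup>2) \<le> real ((3 * (k + k') + 1)^k) *
     (\<Sum>p\<in>{p\<in>Pairs. pmul (fst p) (snd p) \<in> {Z\<in>paulis n. i \<in> supp Z}}. F p)"
    using sum_aZ[of "{Z\<in>paulis n. i \<in> supp Z}"] by (simp add: F_def)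
  also have "(\<Sum>p\<in>{p\<in>Pairs. pmul (fst p) (snd p) \<in> {Z\<in>paulis n. i \<in> supp Z}}. F p)
      \<le> (\<Sum>p\<in>S1 \<union> S2. F p)"
  proof (rule sum_mono2)
    show "finite (S1 \<union> S2)" using finS by simp
    show "{p\<in>Pairs. pmul (fst p) (snd p) \<in> {Z\<in>paulis n. i \<in> supp Z}} \<subseteq> S1 \<union> S2"
      using supp_pmul by (auto simp: Pairs_def S1_def S2_def)
  qed (rule Fnn)
  also have "\<dots> \<le> (\<Sum>p\<in>S1. F p) + (\<Sum>p\<in>S2. F p)"
  proof -
    have "(\<Sum>p\<in>S1 \<union> S2. F p) + (\<Sum>p\<in>S1 \<inter> S2. F p) = (\<Sum>p\<in>S1. F p) + (\<Sum>p\<in>S2. F p)"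
      using finS by (rule sum.union_inter)
    moreover have "(\<Sum>p\<in>S1 \<inter> S2. F p) \<ge> 0" by (intro sum_nonneg Fnn)
    ultimately show ?thesis by linarith
  qed
  also have "(\<Sum>p\<in>S1. F p) \<le> real k * (real ((k'+1)^k) * gg) * (2^k * hh)"
  proof -
    have "(\<Sum>p\<in>S1. F p) \<le> (\<Sum>r\<in>{r\<in>RA. i \<in> supp r}. Lf r * (\<Sum>j\<in>supp r. \<Sum>q\<in>{q\<in>QB. j \<in> supp q}. Kf q))"
      unfolding F_def S1_def
      by (rule overlap_sum2[where SA=supp and SB=supp and \<Phi>="\<lambda>r. i \<in> supp r"])
        (use fin_RA fin_QB Lf_nonneg Kf_nonneg fin_supp_RA in auto)
    also have "\<dots> \<le> (\<Sum>r\<in>{r\<in>RA. i \<in> supp r}. Lf r * (real k * (real ((k'+1)^k) * gg)))"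
      by (intro sum_mono mult_left_mono innerK gg Lf_nonneg) auto
    also have "\<dots> = real k * (real ((k'+1)^k) * gg) * (\<Sum>r\<in>{r\<in>RA. i \<in> supp r}. Lf r)"
      by (simp add: sum_distrib_left mult.commute)
    also have "\<dots> \<le> real k * (real ((k'+1)^k) * gg) * (2^k * hh)"
      using gg0 by (intro mult_left_mono sumL hh) auto
    finally show ?thesis .
  qed
  also have "(\<Sum>p\<in>S2. F p) \<le> real k' * (2^k * hh) * (real ((k'+1)^k) * gg)"
  proof -
    have "(\<Sum>p\<in>S2. F p) \<le> (\<Sum>q\<in>{q\<in>QB. i \<in> supp q}. Kf q * (\<Sum>j\<in>supp q. \<Sum>r\<in>{r\<in>RA. j \<in> supp r}. Lf r))"
      unfolding F_def S2_def
      by (rule overlap_sum1[where SA=supp and SB=supp and \<Phi>="\<lambda>q. i \<in> supp q"])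
        (use fin_RA fin_QB Lf_nonneg Kf_nonneg fin_supp_QB in auto)
    also have "\<dots> \<le> (\<Sum>q\<in>{q\<in>QB. i \<in> supp q}. Kf q * (real k' * (2^k * hh)))"
      by (intro sum_mono mult_left_mono innerL hh Kf_nonneg) auto
    also have "\<dots> = real k' * (2^k * hh) * (\<Sum>q\<in>{q\<in>QB. i \<in> supp q}. Kf q)"
      by (simp add: sum_distrib_left mult.commute)
    also have "\<dots> \<le> real k' * (2^k * hh) * (real ((k'+1)^k) * gg)"
      using hh0 by (intro mult_left_mono sumK_loc gg) auto
    finally show ?thesis .
  qed
  finally show ?thesis by (simp add: algebra_simps)
qed

end

lemma omega_norm: "cmod (omega n X Y) = 1"
  unfolding omega_def prod_norm[symmetric] by (simp add: om1_norm)

lemma omega_comm: "\<not> anti X Y \<Longrightarrow> omega n X Y = omega n Y X"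
  unfolding omega_def anti_def by (intro prod.cong refl om1_comm) blast

lemma conv_outside: "Z \<notin> paulis n \<Longrightarrow> conv n \<xi> \<eta> Z = 0"
  unfolding conv_def using pmul_paulis by (intro sum.neutral ballI) auto

lemma comm_bound:
  fixes lam mu :: "(nat \<Rightarrow> nat) \<Rightarrow> real"
  shows "cmod (conv n (\<lambda>X. complex_of_real (lam X)) (\<lambda>X. complex_of_real (mu X)) Z
              - conv n (\<lambda>X. complex_of_real (mu X)) (\<lambda>X. complex_of_real (lam X)) Z)
         \<le> 2 * aZ n lam mu Z"
proof -
  let ?x = "\<lambda>X. complex_of_real (lam X)" and ?y = "\<lambda>X. complex_of_real (mu X)"
  have swap: "conv n ?y ?x Z = (\<Sum>X\<in>paulis n. \<Sum>Y\<in>paulis n.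
      if pmul X Y = Z then omega n Y X * ?x X * ?y Y else 0)"
  proof -
    have e: "(if pmul b a = Z then omega n b a * ?y b * ?x a else 0)
        = (if pmul a b = Z then omega n b a * ?x a * ?y b else 0)" for a b
      by (simp add: pmul_comm[of b a] ac_simps)
    have "conv n ?y ?x Z = (\<Sum>Y\<in>paulis n. \<Sum>X\<in>paulis n. if pmul X Y = Z then omega n X Y * ?y X * ?x Y else 0)"
      unfolding conv_def by (rule sum.swap)
    also have "\<dots> = (\<Sum>X\<in>paulis n. \<Sum>Y\<in>paulis n. if pmul X Y = Z then omega n Y X * ?x X * ?y Y else 0)"
      by (intro sum.cong refl) (rule e)
    finally show ?thesis .
  qed
  have "conv n ?x ?y Z - conv n ?y ?x Z = (\<Sum>X\<in>paulis n. \<Sum>Y\<in>paulis n.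
      (if pmul X Y = Z then omega n X Y * ?x X * ?y Y else 0) - (if pmul X Y = Z then omega n Y X * ?x X * ?y Y else 0))"
    unfolding swap unfolding conv_def by (simp only: sum_subtractf)
  also have "\<dots> = (\<Sum>X\<in>paulis n. \<Sum>Y\<in>paulis n.
      if pmul X Y = Z then (omega n X Y - omega n Y X) * ?x X * ?y Y else 0)"
    by (intro sum.cong refl) (simp add: left_diff_distrib)
  finally have eq: "conv n ?x ?y Z - conv n ?y ?x Z = (\<Sum>X\<in>paulis n. \<Sum>Y\<in>paulis n.
      if pmul X Y = Z then (omega n X Y - omega n Y X) * ?x X * ?y Y else 0)" .
  have "cmod (\<Sum>X\<in>paulis n. \<Sum>Y\<in>paulis n.
      if pmul X Y = Z then (omega n X Y - omega n Y X) * ?x X * ?y Y else 0) \<le> (\<Sum>X\<in>paulis n. \<Sum>Y\<in>paulis n.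
      cmod (if pmul X Y = Z then (omega n X Y - omega n Y X) * ?x X * ?y Y else 0))"
    by (rule order_trans[OF norm_sum sum_mono[OF norm_sum]])
  also have "\<dots> \<le> (\<Sum>X\<in>paulis n. \<Sum>Y\<in>paulis n.
      2 * (if pmul X Y = Z \<and> anti X Y then \<bar>lam X\<bar> * \<bar>mu Y\<bar> else 0))"
  proof (intro sum_mono)
    fix X Y
    show "cmod (if pmul X Y = Z then (omega n X Y - omega n Y X) * ?x X * ?y Y else 0)
        \<le> 2 * (if pmul X Y = Z \<and> anti X Y then \<bar>lam X\<bar> * \<bar>mu Y\<bar> else 0)"
    proof (cases "pmul X Y = Z \<and> anti X Y")
      case True
      have "cmod (omega n X Y - omega n Y X) \<le> cmod (omega n X Y) + cmod (omega n Y X)"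
        by (rule norm_triangle_ineq4)
      then have o: "cmod (omega n X Y - omega n Y X) \<le> 2" by (simp add: omega_norm)
      have "cmod ((omega n X Y - omega n Y X) * ?x X * ?y Y) = cmod (omega n X Y - omega n Y X) * (\<bar>lam X\<bar> * \<bar>mu Y\<bar>)"
        by (simp add: norm_mult)
      also have "\<dots> \<le> 2 * (\<bar>lam X\<bar> * \<bar>mu Y\<bar>)" by (rule mult_right_mono[OF o]) simp
      finally show ?thesis using True by simp
    next
      case False
      then show ?thesis using omega_comm[of X Y n] by auto
    qed
  qed
  also have "\<dots> = 2 * aZ n lam mu Z"
    unfolding aZ_def by (simp add: sum_distrib_left)
  finally show ?thesis unfolding eq .
qed

lemma loc_hyp:
  fixes lam :: "(nat \<Rightarrow> nat) \<Rightarrow> real"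
  assumes sup: "\<forall>X. lam X \<noteq> 0 \<longrightarrow> X \<in> paulis n" and H: "H = op_of n (\<lambda>X. complex_of_real (lam X))"
  shows "(\<Sum>X\<in>{X\<in>paulis n. j \<in> supp X}. (lam X)\<^sup>2) \<le> (loc2_norm n H)\<^sup>2"
    and "0 \<le> loc2_norm n H"
proof -
  have pc: "pauli_coeff n H = (\<lambda>X. complex_of_real (lam X))"
    unfolding H using sup by (intro coeff_op) auto
  define f where "f i = sqrt (\<Sum>X\<in>{X\<in>paulis n. i \<in> supp X}. (cmod (pauli_coeff n H X))\<^sup>2)" for i
  have L: "loc2_norm n H = Max (insert 0 (f ` {..<n}))" by (simp add: loc2_norm_def f_def)
  have fin: "finite (insert 0 (f ` {..<n}))" by simp
  show h0: "0 \<le> loc2_norm n H" unfolding L using fin by (rule Max_ge) simp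
  show "(\<Sum>X\<in>{X\<in>paulis n. j \<in> supp X}. (lam X)\<^sup>2) \<le> (loc2_norm n H)\<^sup>2"
  proof (cases "j < n")
    case True
    have "f j \<le> loc2_norm n H" unfolding L using fin True by (intro Max_ge) auto
    moreover have "f j = sqrt (\<Sum>X\<in>{X\<in>paulis n. j \<in> supp X}. (lam X)\<^sup>2)"
      by (simp add: f_def pc)
    ultimately show ?thesis by (metis sqrt_le_D)
  next
    case False
    have E: "{X\<in>paulis n. j \<in> supp X} = {}" using False supp_paulis by fastforce
    have "(\<Sum>X\<in>{X\<in>paulis n. j \<in> supp X}. (lam X)\<^sup>2) = 0" by (simp only: E sum.empty)
    then show ?thesis by simp
  qed
qed

lemma numeric:
  fixes k k' :: nat
  assumes k: "k \<ge> 1"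
  shows "4 * real ((3 * (k + k') + 1)^k) * (real (k + k') * (2^k * real ((k'+1)^k)))
        \<le> 4 * ((4 * (real k' + real k))^(3 * k))\<^sup>2"
proof -
  define s where "s = real k' + real k"
  have s1: "s \<ge> 1" using k by (simp add: s_def)
  have a: "real ((3 * (k + k') + 1)^k) \<le> (4 * s)^k"
  proof -
    have "real ((3 * (k + k') + 1)^k) = (3 * s + 1)^k" by (simp add: s_def algebra_simps)
    also have "\<dots> \<le> (4 * s)^k" using s1 by (intro power_mono) auto
    finally show ?thesis .
  qed
  have b: "real (k + k') \<le> (4 * s)^k"
  proof -
    have "real (k + k') = s" by (simp add: s_def)
    also have "\<dots> \<le> 4 * s" using s1 by simp
    also have "\<dots> = (4 * s)^1" by simp
    also have "\<dots> \<le> (4 * s)^k" using s1 k by (intro power_increasing) auto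
    finally show ?thesis .
  qed
  have c: "2^k * real ((k'+1)^k) \<le> (4 * s)^k"
  proof -
    have "2^k * real ((k'+1)^k) = (2 * (real k' + 1))^k"
      by (simp only: power_mult_distrib of_nat_power of_nat_add of_nat_1)
    also have "\<dots> \<le> (4 * s)^k" using k by (intro power_mono) (auto simp: s_def)
    finally show ?thesis .
  qed
  have bc: "real (k + k') * (2^k * real ((k'+1)^k)) \<le> (4 * s)^k * (4 * s)^k"
    by (rule mult_mono[OF b c]) (use s1 in auto)
  have "real ((3 * (k + k') + 1)^k) * (real (k + k') * (2^k * real ((k'+1)^k)))
      \<le> (4 * s)^k * ((4 * s)^k * (4 * s)^k)"
    by (rule mult_mono[OF a bc]) (use s1 in auto)
  also have "\<dots> = (4 * s)^(3 * k)"
  proof -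
    have "(3::nat) * k = k + (k + k)" by simp
    then show ?thesis by (simp only: power_add)
  qed
  also have "\<dots> \<le> ((4 * s)^(3 * k))\<^sup>2"
  proof -
    define t where "t = (4 * s)^(3 * k)"
    have "1 \<le> t" unfolding t_def using s1 by (intro one_le_power) auto
    then have "t * 1 \<le> t * t" by (intro mult_left_mono) auto
    then show ?thesis unfolding t_def[symmetric] by (simp add: power2_eq_square)
  qed
  finally show ?thesis by (simp add: s_def)
qed

lemma sq_le_bound:
  fixes a b :: real
  assumes "0 \<le> a" "a \<le> 2 * b"
  shows "a\<^sup>2 \<le> 4 * b\<^sup>2"
proof -
  have "a\<^sup>2 \<le> (2 * b)\<^sup>2" using assms by (intro power_mono) auto
  then show ?thesis by (simp add: power_mult_distrib)
qed

lemma key_constF: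
  fixes Nm kk hh S P :: real and k k' :: nat
  assumes "0 \<le> Nm" "real k' \<le> kk" "0 \<le> hh" "0 \<le> S" "0 \<le> P"
  shows "Nm * ((real k' * (2^k * hh)) * (P * S)) \<le> (Nm * (kk * (2^k * P))) * (hh * S)"
proof -
  have "Nm * ((real k' * (2^k * hh)) * (P * S)) = (Nm * (real k' * (2^k * P))) * (hh * S)"
    by (simp add: ac_simps)
  also have "\<dots> \<le> (Nm * (kk * (2^k * P))) * (hh * S)"
    using assms by (intro mult_right_mono mult_left_mono) auto
  finally show ?thesis .
qed

theorem lemma3p7:
  shows "\<exists>C::real. \<forall>(n::nat) (k::nat) (k'::nat) H G.
     is_klocal_ham n k H \<longrightarrow> is_klocal_ham n k' G \<longrightarrow>
       frob_norm (commutator H G)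
         \<le> C * (4 * (real k' + real k)) ^ (3 * k) * loc2_norm n H * frob_norm G
     \<and> loc2_norm n (commutator H G)
         \<le> C * (4 * (real k' + real k)) ^ (3 * k) * loc2_norm n H * loc2_norm n G"
proof (intro exI[of _ 2] allI impI)
  fix n k k' :: nat and H G
  assume hH: "is_klocal_ham n k H" and hG: "is_klocal_ham n k' G"
  obtain lam :: "(nat \<Rightarrow> nat) \<Rightarrow> real" where
    lam: "\<forall>X. lam X \<noteq> 0 \<longrightarrow> X \<in> paulis n \<and> X \<noteq> (\<lambda>_. 0) \<and> card (supp X) \<le> k"
    and H: "H = op_of n (\<lambda>X. complex_of_real (lam X))"
    using hH unfolding is_klocal_ham_def by blast
  obtain mu :: "(nat \<Rightarrow> nat) \<Rightarrow> real" where
    mu: "\<forall>X. mu X \<noteq> 0 \<longrightarrow> X \<in> paulis n \<and> X \<noteq> (\<lambda>_. 0) \<and> card (supp X) \<le> k'"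
    and G: "G = op_of n (\<lambda>X. complex_of_real (mu X))"
    using hG unfolding is_klocal_ham_def by blast
  let ?x = "\<lambda>X. complex_of_real (lam X)" and ?y = "\<lambda>X. complex_of_real (mu X)"
  define c where "c Z = conv n ?x ?y Z - conv n ?y ?x Z" for Z
  have comm: "commutator H G = op_of n c"
    unfolding commutator_def H G op_mult op_minus c_def by simp
  have cc: "pauli_coeff n (commutator H G) = c"
    unfolding comm by (rule coeff_op) (simp add: c_def conv_outside)
  have hA: "\<And>X. lam X \<noteq> 0 \<Longrightarrow> X \<in> paulis n \<and> card (supp X) \<le> k" using lam by blast
  have hB: "\<And>Y. mu Y \<noteq> 0 \<Longrightarrow> Y \<in> paulis n \<and> card (supp Y) \<le> k'" using mu by blast
  define h where "h = loc2_norm n H"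
  define g where "g = loc2_norm n G"
  have hh: "\<And>j. (\<Sum>X\<in>{X\<in>paulis n. j \<in> supp X}. (lam X)\<^sup>2) \<le> h\<^sup>2"
    and h0: "0 \<le> h" unfolding h_def using loc_hyp[OF _ H] lam by blast+
  have gg: "\<And>j. (\<Sum>Y\<in>{Y\<in>paulis n. j \<in> supp Y}. (mu Y)\<^sup>2) \<le> g\<^sup>2"
    and g0: "0 \<le> g" unfolding g_def using loc_hyp[OF _ G] mu by blast+
  have cb: "(cmod (c Z))\<^sup>2 \<le> 4 * (aZ n lam mu Z)\<^sup>2" for Z
    using comm_bound[of n lam mu Z] by (intro sq_le_bound) (auto simp: c_def)
  define B where "B = (4 * (real k' + real k)) ^ (3 * k)"
  have B0: "0 \<le> B" unfolding B_def by simp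
  define SG where "SG = (\<Sum>Y\<in>paulis n. (mu Y)\<^sup>2)"
  have SG0: "0 \<le> SG" unfolding SG_def by (intro sum_nonneg) auto
  have KF: "(\<Sum>Z\<in>paulis n. (cmod (c Z))\<^sup>2) \<le> 4 * B\<^sup>2 * h\<^sup>2 * SG"
    and KL: "\<And>i. (\<Sum>Z\<in>{Z\<in>paulis n. i \<in> supp Z}. (cmod (c Z))\<^sup>2) \<le> 4 * B\<^sup>2 * h\<^sup>2 * g\<^sup>2"
  proof -
    have "(\<Sum>Z\<in>paulis n. (cmod (c Z))\<^sup>2) \<le> 4 * B\<^sup>2 * h\<^sup>2 * SG \<and>
      (\<forall>i. (\<Sum>Z\<in>{Z\<in>paulis n. i \<in> supp Z}. (cmod (c Z))\<^sup>2) \<le> 4 * B\<^sup>2 * h\<^sup>2 * g\<^sup>2)"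
    proof (cases "k = 0")
      case True
      have l0: "lam X = 0" for X
      proof (rule ccontr)
        assume "lam X \<noteq> 0"
        then have X: "X \<in> paulis n" "X \<noteq> (\<lambda>_. 0)" "card (supp X) \<le> 0" using lam True by auto
        then have "supp X = {}" using finite_supp by auto
        then show False using X(2) by (auto simp: supp_def fun_eq_iff)
      qed
      have "aZ n lam mu Z = 0" for Z unfolding aZ_def
        by (intro sum.neutral ballI) (simp add: l0[of _])
      then have c0: "cmod (c Z) = 0" for Z using cb[of Z] by simp
      have r0: "0 \<le> 4 * B\<^sup>2 * h\<^sup>2 * SG" "0 \<le> 4 * B\<^sup>2 * h\<^sup>2 * g\<^sup>2" using SG0 by auto
      show ?thesis using r0 by (simp add: c0)
    next
      case False
      then have k1: "k \<ge> 1" by simp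
      define Nm where "Nm = real ((3 * (k + k') + 1)^k)"
      define KK where "KK = Nm * (real (k + k') * (2^k * real ((k'+1)^k)))"
      have Nm0: "0 \<le> Nm" by (simp add: Nm_def)
      have KK: "4 * KK \<le> 4 * B\<^sup>2" unfolding KK_def Nm_def B_def using numeric[OF k1, of k'] by simp
      have part1: "(\<Sum>Z\<in>paulis n. (cmod (c Z))\<^sup>2) \<le> 4 * B\<^sup>2 * h\<^sup>2 * SG"
      proof -
        have "(\<Sum>Z\<in>paulis n. (cmod (c Z))\<^sup>2) \<le> (\<Sum>Z\<in>paulis n. 4 * (aZ n lam mu Z)\<^sup>2)"
          by (intro sum_mono cb)
        also have "\<dots> = 4 * (\<Sum>Z\<in>paulis n. (aZ n lam mu Z)\<^sup>2)" by (simp add: sum_distrib_left)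
        also have "\<dots> \<le> 4 * (Nm * ((real k' * (2^k * h\<^sup>2)) * (real ((k'+1)^k) * SG)))"
          using coreF[OF hA hB hh] unfolding Nm_def SG_def by simp
        also have "\<dots> \<le> 4 * (KK * (h\<^sup>2 * SG))"
          unfolding KK_def by (rule mult_left_mono[OF key_constF[OF Nm0]]) (use SG0 in auto)
        also have "\<dots> \<le> 4 * B\<^sup>2 * (h\<^sup>2 * SG)"
          using KK SG0 by (simp add: mult_right_mono mult.assoc[symmetric])
        finally show ?thesis by (simp add: mult.assoc)
      qed
      have part2: "(\<Sum>Z\<in>{Z\<in>paulis n. i \<in> supp Z}. (cmod (c Z))\<^sup>2) \<le> 4 * B\<^sup>2 * h\<^sup>2 * g\<^sup>2" for i
      proof -
        have "(\<Sum>Z\<in>{Z\<in>paulis n. i \<in> supp Z}. (cmod (c Z))\<^sup>2) \<le> (\<Sum>Z\<in>{Z\<in>paulis n. i \<in> supp Z}. 4 * (aZ n lam mu Z)\<^sup>2)"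
          by (intro sum_mono cb)
        also have "\<dots> = 4 * (\<Sum>Z\<in>{Z\<in>paulis n. i \<in> supp Z}. (aZ n lam mu Z)\<^sup>2)" by (simp add: sum_distrib_left)
        also have "\<dots> \<le> 4 * (Nm * (real (k + k') * (2^k * h\<^sup>2) * (real ((k'+1)^k) * g\<^sup>2)))"
          using coreL[OF hA hB hh gg, of i] unfolding Nm_def by simp
        also have "\<dots> = 4 * (KK * (h\<^sup>2 * g\<^sup>2))"
          unfolding KK_def by (simp add: ac_simps)
        also have "\<dots> \<le> 4 * B\<^sup>2 * (h\<^sup>2 * g\<^sup>2)"
          using KK by (simp add: mult_right_mono mult.assoc[symmetric])
        finally show ?thesis by (simp add: mult.assoc)
      qed
      show ?thesis using part1 part2 by blast
    qed
    then show "(\<Sum>Z\<in>paulis n. (cmod (c Z))\<^sup>2) \<le> 4 * B\<^sup>2 * h\<^sup>2 * SG"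
      "\<And>i. (\<Sum>Z\<in>{Z\<in>paulis n. i \<in> supp Z}. (cmod (c Z))\<^sup>2) \<le> 4 * B\<^sup>2 * h\<^sup>2 * g\<^sup>2" by auto
  qed
  have fG: "frob_norm G = sqrt (2^n * SG)"
    unfolding G frob_op SG_def by simp
  have fG0: "0 \<le> frob_norm G" unfolding fG using SG0 by simp
  show "frob_norm (commutator H G) \<le> 2 * B * loc2_norm n H * frob_norm G \<and>
        loc2_norm n (commutator H G) \<le> 2 * B * loc2_norm n H * loc2_norm n G"
    unfolding B_def[symmetric] h_def[symmetric] g_def[symmetric]
  proof
    show "frob_norm (commutator H G) \<le> 2 * B * h * frob_norm G"
    proof -
      have "frob_norm (commutator H G) = sqrt (2^n * (\<Sum>Z\<in>paulis n. (cmod (c Z))\<^sup>2))"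
        unfolding comm frob_op ..
      also have "\<dots> \<le> 2 * B * h * frob_norm G"
      proof (rule real_le_lsqrt)
        show "0 \<le> 2 * B * h * frob_norm G" using B0 h0 fG0 by simp
        have "(2 * B * h * frob_norm G)\<^sup>2 = 4 * B\<^sup>2 * h\<^sup>2 * (2^n * SG)"
          unfolding fG using SG0 by (simp add: power_mult_distrib)
        moreover have "2^n * (\<Sum>Z\<in>paulis n. (cmod (c Z))\<^sup>2) \<le> 4 * B\<^sup>2 * h\<^sup>2 * (2^n * SG)"
          using KF by (simp add: ac_simps)
        ultimately show "2^n * (\<Sum>Z\<in>paulis n. (cmod (c Z))\<^sup>2) \<le> (2 * B * h * frob_norm G)\<^sup>2" by simp
      qed
      finally show ?thesis .
    qed
    show "loc2_norm n (commutator H G) \<le> 2 * B * h * g"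
    proof -
      define f where "f i = sqrt (\<Sum>Z\<in>{Z\<in>paulis n. i \<in> supp Z}. (cmod (pauli_coeff n (commutator H G) Z))\<^sup>2)" for i
      have L: "loc2_norm n (commutator H G) = Max (insert 0 (f ` {..<n}))"
        by (simp add: loc2_norm_def f_def)
      have b0: "0 \<le> 2 * B * h * g" using B0 h0 g0 by simp
      have fb: "f i \<le> 2 * B * h * g" for i
        unfolding f_def cc
      proof (rule real_le_lsqrt[OF b0])
        have "(2 * B * h * g)\<^sup>2 = 4 * B\<^sup>2 * h\<^sup>2 * g\<^sup>2" by (simp add: power_mult_distrib)
        then show "(\<Sum>Z\<in>{Z\<in>paulis n. i \<in> supp Z}. (cmod (c Z))\<^sup>2) \<le> (2 * B * h * g)\<^sup>2" using KL[of i] by simp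
      qed
      show ?thesis unfolding L
        by (rule Max.boundedI) (use b0 fb in auto)
    qed
  qed
qed


end
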